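(* Let $C_*$ be a dg Frobenius algebra, $H_*$ a dg bialgebra, and $\tau:C_*\to H_*$ a twisting cochain with $\mathrm{Im}(\tau)\subset\mathrm{Prim}(H_* )$. Then $(C_*\otimes H_*,\partial_\tau)$, with product $(a\otimes b)(c\otimes d)=\pm ac\otimes bd$, is a differential graded algebra.
   Context: Graded over $\mathbb{Q}$, Koszul signs. A Frobenius algebra is a (graded) commutative algebra with a non-degenerate inner product satisfying $\langle a,bc\rangle=\langle ab,c\rangle$; it is finite dimensional and the inner product turns the multiplication into a cocommutative comultiplication $\Delta(c)=\sum c_{(1)}\otimes c_{(2)}$, which makes $C_*$ a dg coalgebra. A twisting cochain is a degree $-1$ map with $\partial_H\tau+\tau\partial_C+\mu\circ(\tau\otimes\tau)\circ\Delta=0$. $\mathrm{Prim}(H_* )=\{h:\Delta h=h\otimes1+1\otimes h\}$. The twisted differential is $\partial_\tau(c\otimes h)=\partial_Cc\otimes h\pm c\otimes\partial_Hh+\sum \pm c_{(1)}\otimes[\tau(c_{(2)}),h]$, where $[a,h]=ah-(-1)^{|a||h|}ha$ (for primitive $a$ in a Hopf algebra this equals the conjugation action). *)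

theory Defs
  imports Complex_Main "HOL-Library.Poly_Mapping"
begin

text \<open>
  All graded vector spaces are over the rationals and are represented by a
  homogeneous basis: a (possibly infinite) type of basis elements 'b together with a degree
  function deg :: 'b => int.  The tensor product of spaces with bases 'a and 'b is the space with basis
  'a * 'b (degree = sum of degrees).  Linear maps and products are given on basis elements
  and extended (bi)linearly.  Differentials have degree -1 (homological grading).
\<close>

type_synonym 'b vec = "'b \<Rightarrow>\<^sub>0 rat"

definition ksign :: "int \<Rightarrow> rat" where
  "ksign k = (if even k then 1 else -1)"

definition sc :: "rat \<Rightarrow> 'b vec \<Rightarrow> 'b vec" where
  "sc c x = Poly_Mapping.map (\<lambda>v. c * v) x"

definition bv :: "'b \<Rightarrow> 'b vec" where
  "bv b = Poly_Mapping.single b 1"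

definition lin :: "('a \<Rightarrow> 'b vec) \<Rightarrow> 'a vec \<Rightarrow> 'b vec" where
  "lin f x = (\<Sum>a\<in>Poly_Mapping.keys x. sc (Poly_Mapping.lookup x a) (f a))"

definition lin2 :: "('a \<Rightarrow> 'b \<Rightarrow> 'c vec) \<Rightarrow> 'a vec \<Rightarrow> 'b vec \<Rightarrow> 'c vec" where
  "lin2 f x y = (\<Sum>a\<in>Poly_Mapping.keys x. \<Sum>b\<in>Poly_Mapping.keys y. sc (Poly_Mapping.lookup x a * Poly_Mapping.lookup y b) (f a b))"

definition tens :: "'a vec \<Rightarrow> 'b vec \<Rightarrow> ('a \<times> 'b) vec" where
  "tens x y = lin2 (\<lambda>a b. bv (a, b)) x y"

definition tdeg :: "('a \<Rightarrow> int) \<Rightarrow> ('b \<Rightarrow> int) \<Rightarrow> 'a \<times> 'b \<Rightarrow> int" where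
  "tdeg dA dB p = dA (fst p) + dB (snd p)"

definition homog :: "('b \<Rightarrow> int) \<Rightarrow> int \<Rightarrow> 'b vec \<Rightarrow> bool" where
  "homog deg n x \<longleftrightarrow> (\<forall>k\<in>Poly_Mapping.keys x. deg k = n)"

definition tmul :: "('a \<Rightarrow> int) \<Rightarrow> ('b \<Rightarrow> int) \<Rightarrow> ('a \<Rightarrow> 'a \<Rightarrow> 'a vec) \<Rightarrow> ('b \<Rightarrow> 'b \<Rightarrow> 'b vec)
    \<Rightarrow> 'a \<times> 'b \<Rightarrow> 'a \<times> 'b \<Rightarrow> ('a \<times> 'b) vec" where
  "tmul dA dB mA mB p q =
     sc (ksign (dB (snd p) * dA (fst q))) (tens (mA (fst p) (fst q)) (mB (snd p) (snd q)))"

definition tdiff :: "('a \<Rightarrow> int) \<Rightarrow> ('a \<Rightarrow> 'a vec) \<Rightarrow> ('b \<Rightarrow> 'b vec) \<Rightarrow> 'a \<times> 'b \<Rightarrow> ('a \<times> 'b) vec" where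
  "tdiff dA DA DB p = tens (DA (fst p)) (bv (snd p)) + sc (ksign (dA (fst p))) (tens (bv (fst p)) (DB (snd p)))"

definition graded_algebra :: "('a \<Rightarrow> int) \<Rightarrow> ('a \<Rightarrow> 'a \<Rightarrow> 'a vec) \<Rightarrow> 'a vec \<Rightarrow> bool" where
  "graded_algebra deg m u \<longleftrightarrow>
     (\<forall>a b. homog deg (deg a + deg b) (m a b)) \<and> homog deg 0 u \<and>
     (\<forall>a b c. lin2 m (m a b) (bv c) = lin2 m (bv a) (m b c)) \<and>
     (\<forall>a. lin2 m u (bv a) = bv a \<and> lin2 m (bv a) u = bv a)"

definition graded_commutative :: "('a \<Rightarrow> int) \<Rightarrow> ('a \<Rightarrow> 'a \<Rightarrow> 'a vec) \<Rightarrow> bool" where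
  "graded_commutative deg m \<longleftrightarrow> (\<forall>a b. m a b = sc (ksign (deg a * deg b)) (m b a))"

definition is_differential :: "('a \<Rightarrow> int) \<Rightarrow> ('a \<Rightarrow> 'a vec) \<Rightarrow> bool" where
  "is_differential deg d \<longleftrightarrow> (\<forall>a. homog deg (deg a - 1) (d a)) \<and> (\<forall>a. lin d (d a) = 0)"

definition leibniz :: "('a \<Rightarrow> int) \<Rightarrow> ('a \<Rightarrow> 'a \<Rightarrow> 'a vec) \<Rightarrow> ('a \<Rightarrow> 'a vec) \<Rightarrow> bool" where
  "leibniz deg m d \<longleftrightarrow>
     (\<forall>a b. lin d (m a b) = lin2 m (d a) (bv b) + sc (ksign (deg a)) (lin2 m (bv a) (d b)))"

definition dg_algebra :: "('a \<Rightarrow> int) \<Rightarrow> ('a \<Rightarrow> 'a \<Rightarrow> 'a vec) \<Rightarrow> 'a vec \<Rightarrow> ('a \<Rightarrow> 'a vec) \<Rightarrow> bool" where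
  "dg_algebra deg m u d \<longleftrightarrow> graded_algebra deg m u \<and> is_differential deg d \<and> leibniz deg m d"

definition graded_coalgebra :: "('a \<Rightarrow> int) \<Rightarrow> ('a \<Rightarrow> ('a \<times> 'a) vec) \<Rightarrow> ('a \<Rightarrow> rat) \<Rightarrow> bool" where
  "graded_coalgebra deg cm e \<longleftrightarrow>
     (\<forall>c. homog (tdeg deg deg) (deg c) (cm c)) \<and> (\<forall>a. e a \<noteq> 0 \<longrightarrow> deg a = 0) \<and>
     (\<forall>c. lin (\<lambda>((a, b), k). bv (a, (b, k))) (lin (\<lambda>(a, b). tens (cm a) (bv b)) (cm c))
          = lin (\<lambda>(a, b). tens (bv a) (cm b)) (cm c)) \<and>
     (\<forall>c. lin (\<lambda>(a, b). sc (e a) (bv b)) (cm c) = bv c \<and>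
          lin (\<lambda>(a, b). sc (e b) (bv a)) (cm c) = bv c)"

definition cocommutative :: "('a \<Rightarrow> int) \<Rightarrow> ('a \<Rightarrow> ('a \<times> 'a) vec) \<Rightarrow> bool" where
  "cocommutative deg cm \<longleftrightarrow>
     (\<forall>c. lin (\<lambda>(a, b). sc (ksign (deg a * deg b)) (bv (b, a))) (cm c) = cm c)"

definition coderivation :: "('a \<Rightarrow> int) \<Rightarrow> ('a \<Rightarrow> ('a \<times> 'a) vec) \<Rightarrow> ('a \<Rightarrow> 'a vec) \<Rightarrow> bool" where
  "coderivation deg cm d \<longleftrightarrow> (\<forall>c. lin cm (d c) = lin (tdiff deg d d) (cm c))"

definition dg_coalgebra :: "('a \<Rightarrow> int) \<Rightarrow> ('a \<Rightarrow> ('a \<times> 'a) vec) \<Rightarrow> ('a \<Rightarrow> 'a vec) \<Rightarrow> bool" where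
  "dg_coalgebra deg cm d \<longleftrightarrow>
     (\<exists>e. graded_coalgebra deg cm e) \<and> is_differential deg d \<and> coderivation deg cm d"

definition dg_bialgebra :: "('a \<Rightarrow> int) \<Rightarrow> ('a \<Rightarrow> 'a \<Rightarrow> 'a vec) \<Rightarrow> 'a vec \<Rightarrow> ('a \<Rightarrow> 'a vec)
    \<Rightarrow> ('a \<Rightarrow> ('a \<times> 'a) vec) \<Rightarrow> ('a \<Rightarrow> rat) \<Rightarrow> bool" where
  "dg_bialgebra deg m u d cm e \<longleftrightarrow>
     dg_algebra deg m u d \<and> graded_coalgebra deg cm e \<and> coderivation deg cm d \<and>
     (\<forall>a. (\<Sum>k\<in>Poly_Mapping.keys (d a). Poly_Mapping.lookup (d a) k * e k) = 0) \<and>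
     (\<forall>a b. lin cm (m a b) = lin2 (tmul deg deg m m) (cm a) (cm b)) \<and>
     lin cm u = tens u u \<and>
     (\<forall>a b. (\<Sum>k\<in>Poly_Mapping.keys (m a b). Poly_Mapping.lookup (m a b) k * e k) = e a * e b) \<and>
     (\<Sum>k\<in>Poly_Mapping.keys u. Poly_Mapping.lookup u k * e k) = 1"

definition Prim :: "('a \<Rightarrow> ('a \<times> 'a) vec) \<Rightarrow> 'a vec \<Rightarrow> 'a vec set" where
  "Prim cm u = {h. lin cm h = tens h u + tens u h}"

definition ipl :: "('a \<Rightarrow> 'a \<Rightarrow> rat) \<Rightarrow> 'a vec \<Rightarrow> 'a vec \<Rightarrow> rat" where
  "ipl ip x y = (\<Sum>a\<in>Poly_Mapping.keys x. \<Sum>b\<in>Poly_Mapping.keys y. Poly_Mapping.lookup x a * Poly_Mapping.lookup y b * ip a b)"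

definition dg_frobenius :: "('a::finite \<Rightarrow> int) \<Rightarrow> ('a \<Rightarrow> 'a \<Rightarrow> 'a vec) \<Rightarrow> 'a vec \<Rightarrow> ('a \<Rightarrow> 'a vec)
    \<Rightarrow> ('a \<Rightarrow> 'a \<Rightarrow> rat) \<Rightarrow> bool" where
  "dg_frobenius deg m u d ip \<longleftrightarrow>
     dg_algebra deg m u d \<and> graded_commutative deg m \<and>
     (\<forall>a b c. ipl ip (bv a) (m b c) = ipl ip (m a b) (bv c)) \<and>
     (\<forall>x. (\<forall>y. ipl ip x y = 0) \<longrightarrow> x = 0)"

text \<open>the comultiplication induced by the inner product: \<langle>cm c, a\<otimes>b\<rangle> = \<langle>c, ab\<rangle>, where
  \<langle>x\<otimes>y, a\<otimes>b\<rangle> = (-1)^(|y||a|) \<langle>x,a\<rangle>\<langle>y,b\<rangle>\<close>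
definition induced_comult :: "('a \<Rightarrow> int) \<Rightarrow> ('a \<Rightarrow> 'a \<Rightarrow> 'a vec) \<Rightarrow> ('a \<Rightarrow> 'a \<Rightarrow> rat)
    \<Rightarrow> ('a \<Rightarrow> ('a \<times> 'a) vec) \<Rightarrow> bool" where
  "induced_comult deg m ip cm \<longleftrightarrow>
     (\<forall>c a b. (\<Sum>p\<in>Poly_Mapping.keys (cm c). Poly_Mapping.lookup (cm c) p * ksign (deg (snd p) * deg a) * ip (fst p) a * ip (snd p) b)
              = ipl ip (bv c) (m a b))"

definition twisting_cochain :: "('c \<Rightarrow> int) \<Rightarrow> ('c \<Rightarrow> ('c \<times> 'c) vec) \<Rightarrow> ('c \<Rightarrow> 'c vec)
    \<Rightarrow> ('h \<Rightarrow> int) \<Rightarrow> ('h \<Rightarrow> 'h \<Rightarrow> 'h vec) \<Rightarrow> ('h \<Rightarrow> 'h vec) \<Rightarrow> ('c \<Rightarrow> 'h vec) \<Rightarrow> bool" where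
  "twisting_cochain degC cmC dC degH mH dH \<tau> \<longleftrightarrow>
     (\<forall>c. homog degH (degC c - 1) (\<tau> c)) \<and>
     (\<forall>c. lin dH (\<tau> c) + lin \<tau> (dC c)
          + lin (\<lambda>(a, b). sc (ksign (degC a)) (lin2 mH (\<tau> a) (\<tau> b))) (cmC c) = 0)"

definition gbracket :: "('h \<Rightarrow> int) \<Rightarrow> ('h \<Rightarrow> 'h \<Rightarrow> 'h vec) \<Rightarrow> 'h vec \<Rightarrow> 'h \<Rightarrow> 'h vec" where
  "gbracket deg m x h = lin (\<lambda>k. m k h - sc (ksign (deg k * deg h)) (m h k)) x"

definition twisted_diff :: "('c \<Rightarrow> int) \<Rightarrow> ('c \<Rightarrow> ('c \<times> 'c) vec) \<Rightarrow> ('c \<Rightarrow> 'c vec)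
    \<Rightarrow> ('h \<Rightarrow> int) \<Rightarrow> ('h \<Rightarrow> 'h \<Rightarrow> 'h vec) \<Rightarrow> ('h \<Rightarrow> 'h vec) \<Rightarrow> ('c \<Rightarrow> 'h vec)
    \<Rightarrow> 'c \<times> 'h \<Rightarrow> ('c \<times> 'h) vec" where
  "twisted_diff degC cmC dC degH mH dH \<tau> p =
     tdiff degC dC dH p +
     lin (\<lambda>(a, b). sc (ksign (degC a)) (tens (bv a) (gbracket degH mH (\<tau> b) (snd p)))) (cmC (fst p))"

end

theory Submission
  imports Defs
begin


abbreviation lk :: "('a \<Rightarrow>\<^sub>0 'b::zero) \<Rightarrow> 'a \<Rightarrow> 'b" where "lk \<equiv> Poly_Mapping.lookup"
abbreviation kys :: "('a \<Rightarrow>\<^sub>0 'b::zero) \<Rightarrow> 'a set" where "kys \<equiv> Poly_Mapping.keys"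


lemma lookup_sc[simp]: "lk (sc c x) k = c * lk x k"
  unfolding sc_def by transfer (auto simp: when_def)

lemma lookup_bv: "lk (bv a) k = (if k = a then 1 else 0)"
  unfolding bv_def by (simp add: lookup_single)

lemma keys_bv[simp]: "kys (bv a) = {a}"
  unfolding bv_def by simp

lemma keys_sc: "kys (sc c x) \<subseteq> kys x"
  by (auto simp: in_keys_iff)

lemma sc_add_r: "sc c (x + y) = sc c x + sc c y"
  by (rule poly_mapping_eqI) (simp add: lookup_add algebra_simps)
lemma sc_add_l: "sc (c + d) x = sc c x + sc d x"
  by (rule poly_mapping_eqI) (simp add: lookup_add algebra_simps)
lemma sc_sc[simp]: "sc c (sc d x) = sc (c * d) x"
  by (rule poly_mapping_eqI) simp
lemma sc_one[simp]: "sc 1 x = x"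
  by (rule poly_mapping_eqI) simp
lemma sc_zero_l[simp]: "sc 0 x = 0"
  by (rule poly_mapping_eqI) simp
lemma sc_zero_r[simp]: "sc c 0 = 0"
  by (rule poly_mapping_eqI) simp
lemma sc_minus_r: "sc c (- x) = - sc c x"
  by (rule poly_mapping_eqI) simp
lemma sc_minus_l: "sc (- c) x = - sc c x"
  by (rule poly_mapping_eqI) simp
lemma sc_diff_r: "sc c (x - y) = sc c x - sc c y"
  by (rule poly_mapping_eqI) (simp add: lookup_minus algebra_simps)
lemma sc_sum: "sc c (sum f S) = (\<Sum>i\<in>S. sc c (f i))"
  by (induction S rule: infinite_finite_induct) (auto simp: sc_add_r)
lemma sc_m1: "sc (-1) x = - x"
  by (rule poly_mapping_eqI) simp

lemma lin_superset:
  assumes "finite S" "kys x \<subseteq> S"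
  shows "lin f x = (\<Sum>a\<in>S. sc (lk x a) (f a))"
  unfolding lin_def
  by (rule sum.mono_neutral_left) (use assms in \<open>auto simp: in_keys_iff\<close>)

lemma lin_add: "lin f (x + y) = lin f x + lin f y"
proof -
  have S: "kys (x+y) \<subseteq> kys x \<union> kys y" by (rule keys_add)
  show ?thesis
    by (subst (1 2 3) lin_superset[where S="kys x \<union> kys y"])
       (use S in \<open>auto simp: lookup_add sc_add_l sum.distrib\<close>)
qed

lemma lin_sc: "lin f (sc c x) = sc c (lin f x)"
  by (subst (1 2) lin_superset[where S="kys x"]) (use keys_sc[of c x] in \<open>auto simp: sc_sum\<close>)

lemma lin_zero[simp]: "lin f 0 = 0"
  by (simp add: lin_def)

lemma lin_bv[simp]: "lin f (bv a) = f a"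
  by (simp add: lin_def lookup_bv)

lemma lin_minus: "lin f (- x) = - lin f x"
  using lin_sc[of f "-1" x] by (simp add: sc_m1)

lemma lin_diff: "lin f (x - y) = lin f x - lin f y"
  using lin_add[of f x "-y"] by (simp add: lin_minus)

lemma lin_sum: "lin f (sum g S) = (\<Sum>i\<in>S. lin f (g i))"
  by (induction S rule: infinite_finite_induct) (auto simp: lin_add)

lemma lin_cong: "(\<And>a. a \<in> kys x \<Longrightarrow> f a = g a) \<Longrightarrow> lin f x = lin g x"
  by (simp add: lin_def)

lemma lin_fadd: "lin (\<lambda>a. f a + g a) x = lin f x + lin g x"
  by (simp add: lin_def sc_add_r sum.distrib)
lemma lin_fsc: "lin (\<lambda>a. sc c (f a)) x = sc c (lin f x)"
  by (simp add: lin_def sc_sum mult.commute)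
lemma lin_fzero[simp]: "lin (\<lambda>a. 0) x = 0"
  by (simp add: lin_def)
lemma lin_fminus: "lin (\<lambda>a. - f a) x = - lin f x"
  by (simp add: lin_def sc_minus_r sum_negf)
lemma lin_fdiff: "lin (\<lambda>a. f a - g a) x = lin f x - lin g x"
  using lin_fadd[of f "\<lambda>a. - g a" x] by (simp add: lin_fminus)
lemma lin_fsum: "lin (\<lambda>a. \<Sum>i\<in>S. f i a) x = (\<Sum>i\<in>S. lin (f i) x)"
  by (induction S rule: infinite_finite_induct) (auto simp: lin_fadd)

lemma lin_lin: "lin g (lin f x) = lin (\<lambda>a. lin g (f a)) x"
proof -
  have "lin g (lin f x) = lin g (\<Sum>a\<in>kys x. sc (lk x a) (f a))" by (simp add: lin_def[of f])
  also have "\<dots> = (\<Sum>a\<in>kys x. sc (lk x a) (lin g (f a)))" by (simp add: lin_sum lin_sc)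
  finally show ?thesis by (simp add: lin_def[of _ x])
qed

lemma lin_bv_id[simp]: "lin bv x = x"
proof (rule poly_mapping_eqI)
  fix k
  have "lk (lin bv x) k = (\<Sum>xa\<in>kys x. if xa = k then lk x xa else 0)"
    unfolding lin_def lookup_sum by (rule sum.cong) (auto simp: lookup_bv)
  also have "\<dots> = lk x k" by (simp add: in_keys_iff)
  finally show "lk (lin bv x) k = lk x k" .
qed

lemma lin_bv_comp: "lin (\<lambda>a. bv (a)) x = x" by simp

lemma lin2_lin: "lin2 f x y = lin (\<lambda>a. lin (\<lambda>b. f a b) y) x"
  by (simp add: lin2_def lin_def sc_sum mult.commute)

lemma lin2_lin': "lin2 f x y = lin (\<lambda>b. lin (\<lambda>a. f a b) x) y"
  by (simp add: lin2_def lin_def sc_sum mult.commute sum.swap[of _ "kys x"])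

lemma lin2_bv_l[simp]: "lin2 f (bv a) y = lin (f a) y"
  by (simp add: lin2_lin)
lemma lin2_bv_r[simp]: "lin2 f x (bv b) = lin (\<lambda>a. f a b) x"
  by (simp add: lin2_lin)

lemma tens_lin: "tens x y = lin (\<lambda>a. lin (\<lambda>b. bv (a, b)) y) x"
  by (simp add: tens_def lin2_lin)

lemma tens_bv[simp]: "tens (bv a) (bv b) = bv (a, b)"
  by (simp add: tens_lin)

lemma ksign_add: "ksign (a + b) = ksign a * ksign b"
  by (auto simp: ksign_def)
lemma ksign_eq_iff: "ksign a = ksign b \<longleftrightarrow> even (a - b)"
  by (auto simp: ksign_def)
lemma ksign_sq[simp]: "ksign a * ksign a = 1"
  by (auto simp: ksign_def)
lemma ksign_0[simp]: "ksign 0 = 1" by (simp add: ksign_def)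
lemma ksign_1[simp]: "ksign 1 = -1" by (simp add: ksign_def)
lemma ksign_nz[simp]: "ksign a \<noteq> 0" by (simp add: ksign_def)
lemma ksign_cong: "even (a - b) \<Longrightarrow> ksign a = ksign b"
  by (simp add: ksign_eq_iff)
lemma ksign_mult_eq: "even (a + b - c) \<Longrightarrow> ksign a * ksign b = ksign c"
  by (auto simp: ksign_def)
lemma ksign_neg_iff: "ksign a = - ksign b \<longleftrightarrow> odd (a - b)"
  by (auto simp: ksign_def)

lemma kys_sum: "kys (sum f S) \<subseteq> (\<Union>i\<in>S. kys (f i))"
proof (induction S rule: infinite_finite_induct)
  case (insert x F)
  then show ?case using keys_add[of "f x" "sum f F"] by auto
qed auto

lemma kys_lin: "kys (lin f x) \<subseteq> (\<Union>a\<in>kys x. kys (f a))"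
  unfolding lin_def using kys_sum keys_sc by fastforce

lemma homog_lin: "(\<And>a. a \<in> kys x \<Longrightarrow> homog deg n (f a)) \<Longrightarrow> homog deg n (lin f x)"
  unfolding homog_def using kys_lin by fastforce
lemma homog_add: "homog deg n x \<Longrightarrow> homog deg n y \<Longrightarrow> homog deg n (x + y)"
  unfolding homog_def using keys_add by fastforce
lemma homog_sc: "homog deg n x \<Longrightarrow> homog deg n (sc c x)"
  unfolding homog_def using keys_sc by fastforce
lemma homog_minus: "homog deg n x \<Longrightarrow> homog deg n (- x)"
  unfolding homog_def by simp
lemma homog_diff: "homog deg n x \<Longrightarrow> homog deg n y \<Longrightarrow> homog deg n (x - y)"
  using homog_add[of deg n x "-y"] homog_minus by fastforce
lemma homog_zero[simp]: "homog deg n 0"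
  unfolding homog_def by simp
lemma homog_bv[simp]: "homog deg n (bv a) \<longleftrightarrow> deg a = n"
  unfolding homog_def by simp
lemma homogD: "homog deg n x \<Longrightarrow> a \<in> kys x \<Longrightarrow> deg a = n"
  unfolding homog_def by simp

lemma lin_swap: "lin (\<lambda>a. lin (\<lambda>b. F a b) y) x = lin (\<lambda>b. lin (\<lambda>a. F a b) x) y"
  using lin2_lin[of F x y] lin2_lin'[of F x y] by simp

lemma tens_lin_l: "tens (lin f x) y = lin (\<lambda>a. tens (f a) y) x"
  by (simp add: tens_lin lin_lin)
lemma tens_lin_r: "tens x (lin g y) = lin (\<lambda>b. tens x (g b)) y"
proof -
  have "tens x (lin g y) = lin (\<lambda>a. lin (\<lambda>b. tens (bv a) (g b)) y) x"
    by (simp add: tens_lin lin_lin)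
  also have "\<dots> = lin (\<lambda>b. lin (\<lambda>a. tens (bv a) (g b)) x) y" by (rule lin_swap)
  also have "\<dots> = lin (\<lambda>b. tens x (g b)) y"
    by (simp add: tens_lin_l[symmetric])
  finally show ?thesis .
qed

lemma tens_add_l: "tens (x + y) z = tens x z + tens y z"
  by (simp add: tens_lin lin_add)
lemma tens_add_r: "tens z (x + y) = tens z x + tens z y"
  by (simp add: tens_lin lin_add lin_fadd)
lemma tens_sc_l: "tens (sc c x) z = sc c (tens x z)"
  by (simp add: tens_lin lin_sc)
lemma tens_sc_r: "tens z (sc c x) = sc c (tens z x)"
  by (simp add: tens_lin lin_sc lin_fsc)
lemma tens_minus_l: "tens (- x) z = - tens x z"
  by (simp add: tens_lin lin_minus)
lemma tens_minus_r: "tens z (- x) = - tens z x"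
  by (simp add: tens_lin lin_minus lin_fminus)
lemma tens_diff_l: "tens (x - y) z = tens x z - tens y z"
  by (simp add: tens_lin lin_diff)
lemma tens_diff_r: "tens z (x - y) = tens z x - tens z y"
  by (simp add: tens_lin lin_diff lin_fdiff)
lemma tens_zero_l[simp]: "tens 0 z = 0" by (simp add: tens_lin)
lemma tens_zero_r[simp]: "tens z 0 = 0" by (simp add: tens_lin)

lemma lin_tens: "lin F (tens x y) = lin (\<lambda>a. lin (\<lambda>b. F (a, b)) y) x"
  by (simp add: tens_lin lin_lin)

lemma homog_tens: "homog dA n x \<Longrightarrow> homog dB m y \<Longrightarrow> homog (tdeg dA dB) (n + m) (tens x y)"
  unfolding tens_lin by (intro homog_lin) (auto simp: homogD tdeg_def)

lemma lin_homog_sign: "homog deg n x \<Longrightarrow> lin (\<lambda>a. sc (g (deg a)) (f a)) x = sc (g n) (lin f x)"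
  by (subst lin_cong[where g="\<lambda>a. sc (g n) (f a)"]) (auto simp: homogD lin_fsc)

lemma lin_pair_split: "lin (\<lambda>(a, b). F a b) x = lin (\<lambda>p. F (fst p) (snd p)) x"
  by (simp add: case_prod_beta')


lemma tmul_pair: "tmul dA dB mA mB (a, b) (c, d) = sc (ksign (dB b * dA c)) (tens (mA a c) (mB b d))"
  by (simp add: tmul_def)

lemma lin_tmul_r:
  assumes "homog dB n Y"
  shows "lin (\<lambda>k. lin (\<lambda>l. tmul dA dB mA mB (k, l) (e, f)) Y) X
         = sc (ksign (n * dA e)) (tens (lin2 mA X (bv e)) (lin2 mB Y (bv f)))"
proof -
  have "lin (\<lambda>k. lin (\<lambda>l. tmul dA dB mA mB (k, l) (e, f)) Y) X
      = lin (\<lambda>k. lin (\<lambda>l. sc (ksign (n * dA e)) (tens (mA k e) (mB l f))) Y) X"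
    by (intro lin_cong) (use assms in \<open>auto simp: tmul_pair homogD\<close>)
  also have "\<dots> = sc (ksign (n * dA e)) (tens (lin2 mA X (bv e)) (lin2 mB Y (bv f)))"
    by (simp add: lin_fsc tens_lin_l tens_lin_r) (rule arg_cong[where f="sc _"], rule lin_swap)
  finally show ?thesis .
qed

lemma lin_tmul_l:
  assumes "homog dA n X"
  shows "lin (\<lambda>k. lin (\<lambda>l. tmul dA dB mA mB (a, b) (k, l)) Y) X
         = sc (ksign (dB b * n)) (tens (lin2 mA (bv a) X) (lin2 mB (bv b) Y))"
proof -
  have "lin (\<lambda>k. lin (\<lambda>l. tmul dA dB mA mB (a, b) (k, l)) Y) X
      = lin (\<lambda>k. lin (\<lambda>l. sc (ksign (dB b * n)) (tens (mA a k) (mB b l))) Y) X"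
    by (intro lin_cong) (use assms in \<open>auto simp: tmul_pair homogD\<close>)
  also have "\<dots> = sc (ksign (dB b * n)) (tens (lin2 mA (bv a) X) (lin2 mB (bv b) Y))"
    by (simp add: lin_fsc tens_lin_l tens_lin_r) (rule arg_cong[where f="sc _"], rule lin_swap)
  finally show ?thesis .
qed

lemma tensor_graded_algebra:
  assumes A: "graded_algebra dA mA uA" and B: "graded_algebra dB mB uB"
  shows "graded_algebra (tdeg dA dB) (tmul dA dB mA mB) (tens uA uB)"
proof -
  have hA: "\<And>a b. homog dA (dA a + dA b) (mA a b)" and hB: "\<And>a b. homog dB (dB a + dB b) (mB a b)"
    and uA0: "homog dA 0 uA" and uB0: "homog dB 0 uB"
    and asA: "\<And>a b c. lin2 mA (mA a b) (bv c) = lin2 mA (bv a) (mA b c)"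
    and asB: "\<And>a b c. lin2 mB (mB a b) (bv c) = lin2 mB (bv a) (mB b c)"
    and unA: "\<And>a. lin2 mA uA (bv a) = bv a \<and> lin2 mA (bv a) uA = bv a"
    and unB: "\<And>a. lin2 mB uB (bv a) = bv a \<and> lin2 mB (bv a) uB = bv a"
    using A B unfolding graded_algebra_def by auto
  let ?m = "tmul dA dB mA mB"
  have hom: "homog (tdeg dA dB) (tdeg dA dB p + tdeg dA dB q) (?m p q)" for p q
  proof -
    obtain a b c d where pq: "p = (a, b)" "q = (c, d)" by fastforce
    show ?thesis unfolding pq tmul_pair
      using homog_tens[OF hA[of a c] hB[of b d]]
      by (intro homog_sc) (simp add: tdeg_def algebra_simps)
  qed
  have assoc: "lin2 ?m (?m p q) (bv r) = lin2 ?m (bv p) (?m q r)" for p q r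
  proof -
    obtain a b c d e f where pqr: "p = (a, b)" "q = (c, d)" "r = (e, f)" by (metis surj_pair)
    have "lin2 ?m (?m p q) (bv r) = sc (ksign (dB b * dA c)) (lin (\<lambda>s. ?m s (e, f)) (tens (mA a c) (mB b d)))"
      by (simp add: pqr tmul_pair lin_sc)
    also have "\<dots> = sc (ksign (dB b * dA c)) (sc (ksign ((dB b + dB d) * dA e))
         (tens (lin2 mA (mA a c) (bv e)) (lin2 mB (mB b d) (bv f))))"
      by (simp add: lin_tens lin_tmul_r[OF hB])
    also have "\<dots> = sc (ksign (dB b * dA c) * ksign ((dB b + dB d) * dA e))
         (tens (lin2 mA (bv a) (mA c e)) (lin2 mB (bv b) (mB d f)))"
      using asA[of a c e] asB[of b d f] by simp
    finally have L: "lin2 ?m (?m p q) (bv r) = \<dots>" .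
    have "lin2 ?m (bv p) (?m q r) = sc (ksign (dB d * dA e)) (lin (\<lambda>s. ?m (a, b) s) (tens (mA c e) (mB d f)))"
      by (simp add: pqr tmul_pair lin_sc)
    also have "\<dots> = sc (ksign (dB d * dA e)) (sc (ksign (dB b * (dA c + dA e)))
         (tens (lin2 mA (bv a) (mA c e)) (lin2 mB (bv b) (mB d f))))"
      by (simp add: lin_tens lin_tmul_l[OF hA])
    finally have R: "lin2 ?m (bv p) (?m q r) = sc (ksign (dB d * dA e) * ksign (dB b * (dA c + dA e)))
         (tens (lin2 mA (bv a) (mA c e)) (lin2 mB (bv b) (mB d f)))" by simp
    have "ksign (dB b * dA c) * ksign ((dB b + dB d) * dA e) = ksign (dB d * dA e) * ksign (dB b * (dA c + dA e))"
      by (simp add: ksign_add[symmetric] algebra_simps)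
    then show ?thesis using L R by simp
  qed
  have unit: "lin2 ?m (tens uA uB) (bv p) = bv p \<and> lin2 ?m (bv p) (tens uA uB) = bv p" for p
  proof -
    obtain e f where p: "p = (e, f)" by fastforce
    have "lin2 ?m (tens uA uB) (bv p) = bv p"
      using unA[of e] unB[of f] by (simp add: p lin_tens lin_tmul_r[OF uB0])
    moreover have "lin2 ?m (bv p) (tens uA uB) = bv p"
      using unA[of e] unB[of f] by (simp add: p lin_tens lin_tmul_l[OF uA0])
    ultimately show ?thesis by simp
  qed
  have "homog (tdeg dA dB) 0 (tens uA uB)" using homog_tens[OF uA0 uB0] by simp
  then show ?thesis unfolding graded_algebra_def using hom assoc unit by blast
qed


lemmas par_simps = ksign_add[symmetric] ksign_eq_iff ksign_neg_iff even_add even_mult_iff algebra_simps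

lemma sc_sign_cong: "even (a - b) \<Longrightarrow> sc (ksign a) x = sc (ksign b) x"
  using ksign_cong[of a b] by simp

locale tsetup =
  fixes degC :: "'c::finite \<Rightarrow> int" and mC :: "'c \<Rightarrow> 'c \<Rightarrow> 'c vec" and uC :: "'c vec"
    and dC :: "'c \<Rightarrow> 'c vec" and ip :: "'c \<Rightarrow> 'c \<Rightarrow> rat" and cmC :: "'c \<Rightarrow> ('c \<times> 'c) vec"
    and degH :: "'h \<Rightarrow> int" and mH :: "'h \<Rightarrow> 'h \<Rightarrow> 'h vec" and uH :: "'h vec"
    and dH :: "'h \<Rightarrow> 'h vec" and cmH :: "'h \<Rightarrow> ('h \<times> 'h) vec" and eH :: "'h \<Rightarrow> rat"
    and \<tau> :: "'c \<Rightarrow> 'h vec"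
  assumes frob: "dg_frobenius degC mC uC dC ip"
    and comult: "induced_comult degC mC ip cmC"
    and coalg: "dg_coalgebra degC cmC dC"
    and cocomm: "cocommutative degC cmC"
    and bialg: "dg_bialgebra degH mH uH dH cmH eH"
    and tw: "twisting_cochain degC cmC dC degH mH dH \<tau>"
begin

lemma gaC: "graded_algebra degC mC uC" using frob unfolding dg_frobenius_def dg_algebra_def by blast
lemma gaH: "graded_algebra degH mH uH" using bialg unfolding dg_bialgebra_def dg_algebra_def by blast

lemma hmC: "homog degC (degC a + degC b) (mC a b)" using gaC unfolding graded_algebra_def by blast
lemma hmH: "homog degH (degH a + degH b) (mH a b)" using gaH unfolding graded_algebra_def by blast
lemma asC: "lin (\<lambda>x. mC x c) (mC a b) = lin (mC a) (mC b c)"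
proof -
  have "lin2 mC (mC a b) (bv c) = lin2 mC (bv a) (mC b c)" using gaC unfolding graded_algebra_def by blast
  then show ?thesis by simp
qed
lemma asH: "lin (\<lambda>x. mH x c) (mH a b) = lin (mH a) (mH b c)"
proof -
  have "lin2 mH (mH a b) (bv c) = lin2 mH (bv a) (mH b c)" using gaH unfolding graded_algebra_def by blast
  then show ?thesis by simp
qed
lemma comC: "mC a b = sc (ksign (degC a * degC b)) (mC b a)"
  using frob unfolding dg_frobenius_def graded_commutative_def by blast
lemma invC: "ipl ip (bv a) (mC b c) = ipl ip (mC a b) (bv c)"
  using frob unfolding dg_frobenius_def by blast
lemma nondeg: "(\<And>y. ipl ip x y = 0) \<Longrightarrow> x = 0"
  using frob unfolding dg_frobenius_def by blast
lemma hdC: "homog degC (degC a - 1) (dC a)" using frob unfolding dg_frobenius_def dg_algebra_def is_differential_def by blast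
lemma ddC: "lin dC (dC a) = 0" using frob unfolding dg_frobenius_def dg_algebra_def is_differential_def by blast
lemma leibC0: "lin dC (mC a b) = lin2 mC (dC a) (bv b) + sc (ksign (degC a)) (lin2 mC (bv a) (dC b))"
  using frob unfolding dg_frobenius_def dg_algebra_def leibniz_def by blast
lemma leibC: "lin dC (mC a b) = lin (\<lambda>x. mC x b) (dC a) + sc (ksign (degC a)) (lin (mC a) (dC b))"
  using leibC0 by simp
lemma hdH: "homog degH (degH a - 1) (dH a)" using bialg unfolding dg_bialgebra_def dg_algebra_def is_differential_def by blast
lemma ddH: "lin dH (dH a) = 0" using bialg unfolding dg_bialgebra_def dg_algebra_def is_differential_def by blast
lemma leibH0: "lin dH (mH a b) = lin2 mH (dH a) (bv b) + sc (ksign (degH a)) (lin2 mH (bv a) (dH b))"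
  using bialg unfolding dg_bialgebra_def dg_algebra_def leibniz_def by blast
lemma leibH: "lin dH (mH a b) = lin (\<lambda>x. mH x b) (dH a) + sc (ksign (degH a)) (lin (mH a) (dH b))"
  using leibH0 by simp

lemma gcoC: "\<exists>e. graded_coalgebra degC cmC e" using coalg unfolding dg_coalgebra_def by blast
lemma hcm: "homog (tdeg degC degC) (degC c) (cmC c)"
proof -
  obtain e where "graded_coalgebra degC cmC e" using gcoC by blast
  then show ?thesis unfolding graded_coalgebra_def by blast
qed
lemma coassoc: "lin (\<lambda>((a, b), k). bv (a, (b, k))) (lin (\<lambda>(a, b). tens (cmC a) (bv b)) (cmC c))
          = lin (\<lambda>(a, b). tens (bv a) (cmC b)) (cmC c)"
proof -
  obtain e where "graded_coalgebra degC cmC e" using gcoC by blast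
  then show ?thesis unfolding graded_coalgebra_def by blast
qed
lemma coder: "lin cmC (dC c) = lin (tdiff degC dC dC) (cmC c)"
  using coalg unfolding dg_coalgebra_def coderivation_def by blast
lemma cocom: "lin (\<lambda>(a, b). sc (ksign (degC a * degC b)) (bv (b, a))) (cmC c) = cmC c"
  using cocomm unfolding cocommutative_def by blast
lemma ind: "(\<Sum>p\<in>kys (cmC c). lk (cmC c) p * ksign (degC (snd p) * degC a) * ip (fst p) a * ip (snd p) b)
              = ipl ip (bv c) (mC a b)"
  using comult unfolding induced_comult_def by blast
lemma htau: "homog degH (degC c - 1) (\<tau> c)" using tw unfolding twisting_cochain_def by blast
lemma tweq: "lin dH (\<tau> c) + lin \<tau> (dC c)
          + lin (\<lambda>(a, b). sc (ksign (degC a)) (lin2 mH (\<tau> a) (\<tau> b))) (cmC c) = 0"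
  using tw unfolding twisting_cochain_def by blast

end


context tsetup begin

abbreviation "gb \<equiv> gbracket degH mH"
abbreviation "tm \<equiv> tmul degC degH mC mH"
abbreviation "td \<equiv> tdiff degC dC dH"

lemma gb_bv: "gb (bv k) h = mH k h - sc (ksign (degH k * degH h)) (mH h k)"
  by (simp add: gbracket_def)

lemma gb_lin: "gb (lin f x) h = lin (\<lambda>a. gb (f a) h) x"
  by (simp add: gbracket_def lin_lin)

lemma hgb: "homog degH n x \<Longrightarrow> homog degH (n + degH h) (gb x h)"
  unfolding gbracket_def
proof (rule homog_lin)
  fix a assume "homog degH n x" "a \<in> kys x"
  then have a: "degH a = n" by (rule homogD)
  have 1: "homog degH (n + degH h) (mH a h)" using hmH[of a h] a by simp
  have 2: "homog degH (n + degH h) (mH h a)" using hmH[of h a] a by (simp add: add.commute)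
  show "homog degH (n + degH h) (mH a h - sc (ksign (degH a * degH h)) (mH h a))"
    by (rule homog_diff[OF 1 homog_sc[OF 2]])
qed

lemma br_mult:
  assumes hx: "homog degH n x"
  shows "lin (gb x) (mH h h') = lin (\<lambda>y. mH y h') (gb x h) + sc (ksign (n * degH h)) (lin (mH h) (gb x h'))"
proof -
  have base: "lin (\<lambda>l. mH k l - sc (ksign (degH k * degH l)) (mH l k)) (mH h h')
     = lin (\<lambda>y. mH y h') (mH k h - sc (ksign (degH k * degH h)) (mH h k))
       + sc (ksign (degH k * degH h)) (lin (mH h) (mH k h' - sc (ksign (degH k * degH h')) (mH h' k)))" for k
  proof -
    have "lin (\<lambda>l. mH k l - sc (ksign (degH k * degH l)) (mH l k)) (mH h h')
        = lin (mH k) (mH h h') - lin (\<lambda>l. sc (ksign (degH k * (degH h + degH h'))) (mH l k)) (mH h h')"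
      unfolding lin_fdiff
    proof (rule arg_cong[where f="\<lambda>z. _ - z"], rule lin_cong)
      fix l assume "l \<in> kys (mH h h')"
      then have "degH l = degH h + degH h'" using homogD[OF hmH[of h h']] by blast
      then show "sc (ksign (degH k * degH l)) (mH l k) = sc (ksign (degH k * (degH h + degH h'))) (mH l k)" by simp
    qed
    also have "\<dots> = lin (\<lambda>y. mH y h') (mH k h) - sc (ksign (degH k * (degH h + degH h'))) (lin (mH h) (mH h' k))"
      by (simp only: lin_fsc asH)
    finally have L: "lin (\<lambda>l. mH k l - sc (ksign (degH k * degH l)) (mH l k)) (mH h h') = \<dots>" .
    have fact: "lin (\<lambda>y. mH y h') (mH h k) = lin (mH h) (mH k h')" by (rule asH)
    have sg: "ksign (degH k * (degH h + degH h')) = ksign (degH k * degH h) * ksign (degH k * degH h')"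
      by (simp add: distrib_left ksign_add)
    have ab: "\<And>a b c::'h vec. a - b + (b - c) = a - c" by simp
    show ?thesis unfolding L
      by (simp only: lin_diff lin_sc sc_diff_r sc_sc fact sg ab)
  qed
  have "lin (gb x) (mH h h') = lin (\<lambda>k. lin (\<lambda>l. mH k l - sc (ksign (degH k * degH l)) (mH l k)) (mH h h')) x"
    unfolding gbracket_def by (rule lin_swap)
  also have "\<dots> = lin (\<lambda>k. lin (\<lambda>y. mH y h') (mH k h - sc (ksign (degH k * degH h)) (mH h k))
       + sc (ksign (n * degH h)) (lin (mH h) (mH k h' - sc (ksign (degH k * degH h')) (mH h' k)))) x"
  proof (rule lin_cong)
    fix k assume "k \<in> kys x"
    then have "degH k = n" by (rule homogD[OF hx])
    show "lin (\<lambda>l. mH k l - sc (ksign (degH k * degH l)) (mH l k)) (mH h h') = lin (\<lambda>y. mH y h') (mH k h - sc (ksign (degH k * degH h)) (mH h k))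
       + sc (ksign (n * degH h)) (lin (mH h) (mH k h' - sc (ksign (degH k * degH h')) (mH h' k)))"
      using base[of k] unfolding \<open>degH k = n\<close> .
  qed
  also have "\<dots> = lin (\<lambda>y. mH y h') (gb x h) + sc (ksign (n * degH h)) (lin (mH h) (gb x h'))"
    by (simp only: lin_fadd lin_fsc gbracket_def lin_lin)
  finally show ?thesis .
qed

lemma lin_td_tens:
  assumes "homog degC n X"
  shows "lin td (tens X Y) = tens (lin dC X) Y + sc (ksign n) (tens X (lin dH Y))"
proof -
  have "lin td (tens X Y) = lin (\<lambda>k. lin (\<lambda>l. tens (dC k) (bv l) + sc (ksign n) (tens (bv k) (dH l))) Y) X"
    unfolding lin_tens
  proof (rule lin_cong)
    fix k assume "k \<in> kys X"
    then have "degC k = n" by (rule homogD[OF assms])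
    then show "lin (\<lambda>b. td (k, b)) Y = lin (\<lambda>l. tens (dC k) (bv l) + sc (ksign n) (tens (bv k) (dH l))) Y"
      by (simp add: tdiff_def)
  qed
  also have "\<dots> = tens (lin dC X) Y + sc (ksign n) (tens X (lin dH Y))"
    by (simp only: lin_fadd lin_fsc tens_lin_r[symmetric] lin_bv_id tens_lin_l[symmetric])
  finally show ?thesis .
qed

lemma ks2: "even (a + b - c - d) \<Longrightarrow> ksign a * ksign b = ksign c * ksign d"
  by (auto simp: ksign_def)
lemma ks3: "even (a + b + e - c - d) \<Longrightarrow> ksign a * ksign b * ksign e = ksign c * ksign d"
  by (auto simp: ksign_def)

lemma L0: "lin td (tm (c, h) (c', h')) = lin (\<lambda>s. tm s (c', h')) (td (c, h))
             + sc (ksign (degC c + degH h)) (lin (tm (c, h)) (td (c', h')))"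
proof -
  define A1 where "A1 = tens (lin (\<lambda>a. mC a c') (dC c)) (mH h h')"
  define A2 where "A2 = tens (lin (mC c) (dC c')) (mH h h')"
  define A3 where "A3 = tens (mC c c') (lin (\<lambda>l. mH l h') (dH h))"
  define A4 where "A4 = tens (mC c c') (lin (mH h) (dH h'))"
  have "lin td (tm (c, h) (c', h')) = sc (ksign (degH h * degC c'))
     (tens (lin dC (mC c c')) (mH h h') + sc (ksign (degC c + degC c')) (tens (mC c c') (lin dH (mH h h'))))"
    by (simp only: tmul_pair lin_sc lin_td_tens[OF hmC])
  also have "\<dots> = sc (ksign (degH h * degC c')) (A1 + sc (ksign (degC c)) A2
       + sc (ksign (degC c + degC c')) (A3 + sc (ksign (degH h)) A4))"
    by (simp only: leibC leibH tens_add_l tens_add_r tens_sc_l tens_sc_r A1_def A2_def A3_def A4_def)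
  also have "\<dots> = sc (ksign (degH h * degC c')) A1 + sc (ksign (degH h * degC c') * ksign (degC c)) A2
       + sc (ksign (degH h * degC c') * ksign (degC c + degC c')) A3
       + sc (ksign (degH h * degC c') * ksign (degC c + degC c') * ksign (degH h)) A4"
    by (simp only: sc_add_r sc_sc mult.assoc add.assoc)
  finally have L: "lin td (tm (c, h) (c', h')) = \<dots>" .
  have r1: "lin (\<lambda>s. tm s (c', h')) (tens (dC c) (bv h)) = sc (ksign (degH h * degC c')) A1"
    unfolding lin_tens lin_tmul_r[OF homog_bv[THEN iffD2, OF refl]] A1_def by simp
  have r2: "lin (\<lambda>s. tm s (c', h')) (tens (bv c) (dH h)) = sc (ksign ((degH h - 1) * degC c')) A3"
    unfolding lin_tens lin_tmul_r[OF hdH] A3_def by simp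
  have r3: "lin (tm (c, h)) (tens (dC c') (bv h')) = sc (ksign (degH h * (degC c' - 1))) A2"
    unfolding lin_tens lin_tmul_l[OF hdC] A2_def by simp
  have r4: "lin (tm (c, h)) (tens (bv c') (dH h')) = sc (ksign (degH h * degC c')) A4"
    unfolding lin_tens lin_tmul_l[OF homog_bv[THEN iffD2, OF refl]] A4_def by simp
  have "lin (\<lambda>s. tm s (c', h')) (td (c, h)) + sc (ksign (degC c + degH h)) (lin (tm (c, h)) (td (c', h')))
     = sc (ksign (degH h * degC c')) A1 + sc (ksign (degC c) * ksign ((degH h - 1) * degC c')) A3
       + (sc (ksign (degC c + degH h) * ksign (degH h * (degC c' - 1))) A2
          + sc (ksign (degC c + degH h) * ksign (degC c') * ksign (degH h * degC c')) A4)"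
    unfolding tdiff_def fst_conv snd_conv
    by (simp only: lin_add lin_sc r1 r2 r3 r4 sc_add_r sc_sc mult.assoc)
  moreover have "ksign (degC c) * ksign ((degH h - 1) * degC c') = ksign (degH h * degC c') * ksign (degC c + degC c')"
    by (rule ks2) (simp add: algebra_simps)
  moreover have "ksign (degC c + degH h) * ksign (degH h * (degC c' - 1)) = ksign (degH h * degC c') * ksign (degC c)"
    by (rule ks2) (simp add: algebra_simps)
  moreover have "ksign (degC c + degH h) * ksign (degC c') * ksign (degH h * degC c')
      = ksign (degH h * degC c') * ksign (degC c + degC c') * ksign (degH h)"
    by (simp add: ksign_add mult_ac)
  ultimately show ?thesis unfolding L by (simp only: add_ac mult.assoc)
qed

end


lemma lin_univ: "lin f (x :: ('a::finite) vec) = (\<Sum>a\<in>UNIV. sc (lk x a) (f a))"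
  by (rule lin_superset) auto

lemma lk_lin_univ: "lk (lin f (x :: ('a::finite) vec)) j = (\<Sum>a\<in>UNIV. lk x a * lk (f a) j)"
  by (simp add: lin_univ lookup_sum)

lemma ipl_univ: "ipl ip (x :: ('a::finite) vec) y = (\<Sum>a\<in>UNIV. \<Sum>b\<in>UNIV. lk x a * lk y b * ip a b)"
proof -
  have "ipl ip x y = (\<Sum>a\<in>kys x. \<Sum>b\<in>UNIV. lk x a * lk y b * ip a b)"
    unfolding ipl_def
    by (rule sum.cong[OF refl], rule sum.mono_neutral_left) (auto simp: in_keys_iff)
  also have "\<dots> = (\<Sum>a\<in>UNIV. \<Sum>b\<in>UNIV. lk x a * lk y b * ip a b)"
    by (rule sum.mono_neutral_left) (auto simp: in_keys_iff)
  finally show ?thesis .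
qed

lemma lk_vec_of: "lk (\<Sum>a\<in>(UNIV::'a::finite set). sc (f a) (bv a)) m = f m"
proof -
  have "lk (\<Sum>a\<in>(UNIV::'a set). sc (f a) (bv a)) m = (\<Sum>a\<in>UNIV. if a = m then f a else 0)"
    unfolding lookup_sum by (rule sum.cong) (auto simp: lookup_bv)
  also have "\<dots> = f m" by simp
  finally show ?thesis .
qed

lemma ipl_bv_bv[simp]: "ipl ip (bv a) (bv b) = ip a b"
  by (simp add: ipl_def lookup_bv)

lemma ipl_lin_l: "ipl ip (lin (f::'b::finite \<Rightarrow> 'a::finite vec) x) y = (\<Sum>k\<in>UNIV. lk x k * ipl ip (f k) y)"
proof -
  have "ipl ip (lin f x) y = (\<Sum>a\<in>UNIV. \<Sum>b\<in>UNIV. \<Sum>k\<in>UNIV. lk x k * (lk (f k) a * lk y b * ip a b))"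
    by (simp add: ipl_univ lk_lin_univ sum_distrib_right mult.assoc)
  also have "\<dots> = (\<Sum>a\<in>UNIV. \<Sum>k\<in>UNIV. \<Sum>b\<in>UNIV. lk x k * (lk (f k) a * lk y b * ip a b))"
    by (rule sum.cong[OF refl], rule sum.swap)
  also have "\<dots> = (\<Sum>k\<in>UNIV. \<Sum>a\<in>UNIV. \<Sum>b\<in>UNIV. lk x k * (lk (f k) a * lk y b * ip a b))"
    by (rule sum.swap)
  also have "\<dots> = (\<Sum>k\<in>UNIV. lk x k * ipl ip (f k) y)"
    by (simp add: ipl_univ sum_distrib_left)
  finally show ?thesis .
qed

lemma ipl_lin_r: "ipl ip (x::'a::finite vec) (lin (f::'b::finite \<Rightarrow> 'a vec) y) = (\<Sum>k\<in>UNIV. lk y k * ipl ip x (f k))"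
proof -
  have "ipl ip x (lin f y) = (\<Sum>a\<in>UNIV. \<Sum>b\<in>UNIV. \<Sum>k\<in>UNIV. lk y k * (lk x a * lk (f k) b * ip a b))"
    by (simp add: ipl_univ lk_lin_univ sum_distrib_right sum_distrib_left mult_ac)
  also have "\<dots> = (\<Sum>a\<in>UNIV. \<Sum>k\<in>UNIV. \<Sum>b\<in>UNIV. lk y k * (lk x a * lk (f k) b * ip a b))"
    by (rule sum.cong[OF refl], rule sum.swap)
  also have "\<dots> = (\<Sum>k\<in>UNIV. \<Sum>a\<in>UNIV. \<Sum>b\<in>UNIV. lk y k * (lk x a * lk (f k) b * ip a b))"
    by (rule sum.swap)
  also have "\<dots> = (\<Sum>k\<in>UNIV. lk y k * ipl ip x (f k))"
    by (simp add: ipl_univ sum_distrib_left)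
  finally show ?thesis .
qed

lemma ipl_sc_l: "ipl ip (sc c (x::'a::finite vec)) y = c * ipl ip x y"
  by (simp add: ipl_univ sum_distrib_left mult_ac)

lemma sum_pair_univ: "(\<Sum>p\<in>(UNIV::('a::finite \<times> 'b::finite) set). g p) = (\<Sum>k\<in>UNIV. \<Sum>l\<in>UNIV. g (k, l))"
  by (subst UNIV_Times_UNIV[symmetric]) (simp add: sum.cartesian_product)

lemma ipl_bv_r: "ipl ip (x::'a::finite vec) (bv a) = (\<Sum>k\<in>UNIV. lk x k * ip k a)"
  using ipl_lin_l[of ip bv x "bv a"] by simp

lemma ipl_bv_l: "ipl ip (bv a) (y::'a::finite vec) = (\<Sum>k\<in>UNIV. lk y k * ip a k)"
  using ipl_lin_r[of ip "bv a" bv y] by simp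

context tsetup begin

definition Pt :: "('c \<times> 'c) vec \<Rightarrow> 'c \<Rightarrow> 'c \<Rightarrow> rat" where
  "Pt z a b = (\<Sum>p\<in>UNIV. lk z p * (ksign (degC (snd p) * degC a) * ip (fst p) a * ip (snd p) b))"

lemma P_cm: "Pt (cmC c) a b = ipl ip (bv c) (mC a b)"
proof -
  have "Pt (cmC c) a b = (\<Sum>p\<in>kys (cmC c). lk (cmC c) p * (ksign (degC (snd p) * degC a) * ip (fst p) a * ip (snd p) b))"
    unfolding Pt_def by (rule sum.mono_neutral_right) (auto simp: in_keys_iff)
  then show ?thesis using ind[of c a b] by (simp add: mult.assoc)
qed

lemma P_lin: "Pt (lin (F::'x::finite \<Rightarrow> ('c \<times> 'c) vec) z) a b = (\<Sum>p\<in>UNIV. lk z p * Pt (F p) a b)"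
proof -
  have "Pt (lin F z) a b = (\<Sum>q\<in>UNIV. \<Sum>p\<in>UNIV. lk z p * (lk (F p) q * (ksign (degC (snd q) * degC a) * ip (fst q) a * ip (snd q) b)))"
    unfolding Pt_def lk_lin_univ by (simp add: sum_distrib_right mult.assoc)
  also have "\<dots> = (\<Sum>p\<in>UNIV. \<Sum>q\<in>UNIV. lk z p * (lk (F p) q * (ksign (degC (snd q) * degC a) * ip (fst q) a * ip (snd q) b)))"
    by (rule sum.swap)
  also have "\<dots> = (\<Sum>p\<in>UNIV. lk z p * Pt (F p) a b)"
    unfolding Pt_def by (simp add: sum_distrib_left)
  finally show ?thesis .
qed

lemma P_bv: "Pt (bv (k, l)) a b = ksign (degC l * degC a) * ip k a * ip l b"
proof -
  have "Pt (bv (k, l)) a b = (\<Sum>p\<in>UNIV. if p = (k, l) then ksign (degC (snd p) * degC a) * ip (fst p) a * ip (snd p) b else 0)"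
    unfolding Pt_def by (rule sum.cong) (auto simp: lookup_bv)
  also have "\<dots> = ksign (degC l * degC a) * ip k a * ip l b" by simp
  finally show ?thesis .
qed

lemma P_tens: "Pt (tens X (bv l)) a b = ksign (degC l * degC a) * ipl ip X (bv a) * ip l b"
proof -
  have "tens X (bv l) = lin (\<lambda>k. bv (k, l)) X" by (simp add: tens_lin)
  then have "Pt (tens X (bv l)) a b = (\<Sum>k\<in>UNIV. lk X k * (ksign (degC l * degC a) * ip k a * ip l b))"
    by (simp add: P_lin P_bv)
  also have "\<dots> = ksign (degC l * degC a) * ipl ip X (bv a) * ip l b"
    by (simp add: ipl_bv_r sum_distrib_left sum_distrib_right mult_ac)
  finally show ?thesis .
qed

lemma P_diff: "Pt (z1 - z2) a b = Pt z1 a b - Pt z2 a b"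
  unfolding Pt_def by (simp add: lookup_minus algebra_simps sum_subtractf)

lemma nondeg2:
  assumes H: "\<And>a b. Pt z a b = 0"
  shows "z = 0"
proof -
  have step1: "(\<Sum>k\<in>UNIV. lk z (k, l) * ip k a) = 0" for a l
  proof -
    define w where "w = (\<Sum>l\<in>UNIV. sc (ksign (degC l * degC a) * (\<Sum>k\<in>UNIV. lk z (k, l) * ip k a)) (bv l))"
    have lw: "lk w l = ksign (degC l * degC a) * (\<Sum>k\<in>UNIV. lk z (k, l) * ip k a)" for l
      unfolding w_def by (rule lk_vec_of)
    have "ipl ip w y = 0" for y
    proof -
      have "ipl ip w y = (\<Sum>b\<in>UNIV. lk y b * (\<Sum>l\<in>UNIV. lk w l * ip l b))"
        unfolding ipl_univ by (subst sum.swap) (simp add: sum_distrib_left mult_ac)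
      also have "\<dots> = (\<Sum>b\<in>UNIV. lk y b * Pt z a b)"
      proof (rule sum.cong[OF refl])
        fix b
        have "Pt z a b = (\<Sum>k\<in>UNIV. \<Sum>l\<in>UNIV. lk z (k, l) * (ksign (degC l * degC a) * ip k a * ip l b))"
          unfolding Pt_def sum_pair_univ by simp
        also have "\<dots> = (\<Sum>l\<in>UNIV. \<Sum>k\<in>UNIV. lk z (k, l) * (ksign (degC l * degC a) * ip k a * ip l b))"
          by (rule sum.swap)
        also have "\<dots> = (\<Sum>l\<in>UNIV. lk w l * ip l b)"
          unfolding lw by (simp add: sum_distrib_left sum_distrib_right mult_ac)
        finally show "lk y b * (\<Sum>l\<in>UNIV. lk w l * ip l b) = lk y b * Pt z a b" by simp
      qed
      also have "\<dots> = 0" using H by simp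
      finally show ?thesis .
    qed
    then have "w = 0" by (rule nondeg)
    then have "lk w l = 0" by simp
    then show ?thesis unfolding lw by simp
  qed
  have "lk z (k, l) = 0" for k l
  proof -
    define v where "v = (\<Sum>k\<in>UNIV. sc (lk z (k, l)) (bv k))"
    have lv: "lk v k = lk z (k, l)" for k unfolding v_def by (rule lk_vec_of)
    have "ipl ip v y = 0" for y
    proof -
      have "ipl ip v y = (\<Sum>a\<in>UNIV. lk y a * (\<Sum>k\<in>UNIV. lk z (k, l) * ip k a))"
        unfolding ipl_univ lv by (subst sum.swap) (simp add: sum_distrib_left mult_ac)
      also have "\<dots> = 0" using step1 by simp
      finally show ?thesis .
    qed
    then have "v = 0" by (rule nondeg)
    then show ?thesis using lv[of k] by simp
  qed
  then show ?thesis by (intro poly_mapping_eqI) auto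
qed

end

context tsetup begin

lemma invV: "ipl ip (mC x y) Z = ipl ip (bv x) (lin (mC y) Z)"
proof -
  have "ipl ip (mC x y) Z = ipl ip (mC x y) (lin bv Z)" by simp
  also have "\<dots> = (\<Sum>z\<in>UNIV. lk Z z * ipl ip (mC x y) (bv z))" by (rule ipl_lin_r)
  also have "\<dots> = (\<Sum>z\<in>UNIV. lk Z z * ipl ip (bv x) (mC y z))" by (simp add: invC)
  also have "\<dots> = ipl ip (bv x) (lin (mC y) Z)" by (simp add: ipl_lin_r)
  finally show ?thesis .
qed

lemma ipl_expand_l: "ipl ip X Y = (\<Sum>j\<in>UNIV. lk X j * ipl ip (bv j) Y)"
  using ipl_lin_l[of ip bv X Y] by simp

lemma Pt_cm_lin: "Pt (lin cmC X) a b = ipl ip X (mC a b)"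
  by (simp add: P_lin P_cm ipl_expand_l[of X])

lemma F2: "lin cmC (mC c c') = lin (\<lambda>(k, l). tens (mC c k) (bv l)) (cmC c')"
proof -
  let ?R = "lin (\<lambda>(k, l). tens (mC c k) (bv l)) (cmC c')"
  have "Pt (lin cmC (mC c c')) a b = Pt ?R a b" for a b
  proof -
    have L: "Pt (lin cmC (mC c c')) a b = ksign (degC c * degC c') * ipl ip (bv c') (lin (mC c) (mC a b))"
    proof -
      have "Pt (lin cmC (mC c c')) a b = ipl ip (mC c c') (mC a b)" by (rule Pt_cm_lin)
      also have "\<dots> = ksign (degC c * degC c') * ipl ip (mC c' c) (mC a b)"
        by (subst comC) (simp add: ipl_sc_l)
      also have "\<dots> = ksign (degC c * degC c') * ipl ip (bv c') (lin (mC c) (mC a b))"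
        by (simp add: invV)
      finally show ?thesis .
    qed
    have S: "lk (cmC c') p * lk (mC c a) j * (ksign (degC (snd p) * degC a) * ksign (degC c * degC (fst p)))
        = lk (cmC c') p * lk (mC c a) j * (ksign (degC c * degC c') * ksign (degC (snd p) * degC j))" for p :: "'c \<times> 'c" and j
    proof (cases "lk (cmC c') p = 0 \<or> lk (mC c a) j = 0")
      case False
      then have "p \<in> kys (cmC c')" "j \<in> kys (mC c a)" by (auto simp: in_keys_iff)
      then have d1: "degC (fst p) + degC (snd p) = degC c'" and d2: "degC j = degC c + degC a"
        using homogD[OF hcm] homogD[OF hmC] by (auto simp: tdeg_def)
      have "ksign (degC (snd p) * degC a) * ksign (degC c * degC (fst p)) = ksign (degC c * degC c') * ksign (degC (snd p) * degC j)"
        by (rule ks2) (simp add: d1[symmetric] d2 algebra_simps)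
      then show ?thesis by simp
    qed auto
    have "Pt ?R a b = (\<Sum>p\<in>UNIV. lk (cmC c') p * (ksign (degC (snd p) * degC a) * ipl ip (mC c (fst p)) (bv a) * ip (snd p) b))"
      by (simp add: P_lin case_prod_beta P_tens)
    also have "\<dots> = (\<Sum>p\<in>UNIV. \<Sum>j\<in>UNIV. lk (cmC c') p * lk (mC c a) j * (ksign (degC (snd p) * degC a) * ksign (degC c * degC (fst p))) * (ip (fst p) j * ip (snd p) b))"
    proof (rule sum.cong[OF refl])
      fix p :: "'c \<times> 'c"
      have "ipl ip (mC c (fst p)) (bv a) = ksign (degC c * degC (fst p)) * ipl ip (bv (fst p)) (mC c a)"
        by (subst comC) (simp add: ipl_sc_l invC)
      then show "lk (cmC c') p * (ksign (degC (snd p) * degC a) * ipl ip (mC c (fst p)) (bv a) * ip (snd p) b)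
         = (\<Sum>j\<in>UNIV. lk (cmC c') p * lk (mC c a) j * (ksign (degC (snd p) * degC a) * ksign (degC c * degC (fst p))) * (ip (fst p) j * ip (snd p) b))"
        by (simp add: ipl_bv_l sum_distrib_left sum_distrib_right mult_ac)
    qed
    also have "\<dots> = (\<Sum>p\<in>UNIV. \<Sum>j\<in>UNIV. lk (cmC c') p * lk (mC c a) j * (ksign (degC c * degC c') * ksign (degC (snd p) * degC j)) * (ip (fst p) j * ip (snd p) b))"
      by (simp only: S)
    also have "\<dots> = (\<Sum>j\<in>UNIV. \<Sum>p\<in>UNIV. lk (cmC c') p * lk (mC c a) j * (ksign (degC c * degC c') * ksign (degC (snd p) * degC j)) * (ip (fst p) j * ip (snd p) b))"
      by (rule sum.swap)
    also have "\<dots> = ksign (degC c * degC c') * (\<Sum>j\<in>UNIV. lk (mC c a) j * Pt (cmC c') j b)"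
      unfolding Pt_def by (simp add: sum_distrib_left mult_ac)
    also have "\<dots> = ksign (degC c * degC c') * (\<Sum>j\<in>UNIV. lk (mC c a) j * ipl ip (bv c') (mC j b))"
      by (simp add: P_cm)
    also have "\<dots> = ksign (degC c * degC c') * ipl ip (bv c') (lin (\<lambda>j. mC j b) (mC c a))"
      by (simp add: ipl_lin_r)
    also have "\<dots> = ksign (degC c * degC c') * ipl ip (bv c') (lin (mC c) (mC a b))"
      by (simp add: asC)
    finally show ?thesis using L by simp
  qed
  then have "lin cmC (mC c c') - ?R = 0" by (intro nondeg2) (simp add: P_diff)
  then show ?thesis by simp
qed

end


context tsetup begin

lemma lin_cm_cong:
  "(\<And>k l. degC k + degC l = degC c \<Longrightarrow> F (k, l) = G (k, l)) \<Longrightarrow> lin F (cmC c) = lin G (cmC c)"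
proof (rule lin_cong)
  fix p assume "\<And>k l. degC k + degC l = degC c \<Longrightarrow> F (k, l) = G (k, l)" "p \<in> kys (cmC c)"
  moreover have "degC (fst p) + degC (snd p) = degC c"
    using homogD[OF hcm \<open>p \<in> kys (cmC c)\<close>] by (simp add: tdeg_def)
  ultimately show "F p = G p" by (metis prod.collapse)
qed

lemma F1: "lin cmC (mC c c') = lin (\<lambda>(k, l). sc (ksign (degC l * degC c')) (tens (mC k c') (bv l))) (cmC c)"
proof -
  have "lin cmC (mC c c') = sc (ksign (degC c * degC c')) (lin cmC (mC c' c))"
    by (subst comC) (simp add: lin_sc)
  also have "\<dots> = sc (ksign (degC c * degC c')) (lin (\<lambda>(k, l). tens (mC c' k) (bv l)) (cmC c))"
    by (simp add: F2)
  also have "\<dots> = lin (\<lambda>(k, l). sc (ksign (degC c * degC c')) (tens (mC c' k) (bv l))) (cmC c)"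
    by (simp add: lin_fsc[symmetric] case_prod_beta')
  also have "\<dots> = lin (\<lambda>(k, l). sc (ksign (degC l * degC c')) (tens (mC k c') (bv l))) (cmC c)"
  proof (rule lin_cm_cong)
    fix k l assume d: "degC k + degC l = degC c"
    have "ksign (degC l * degC c') * ksign (degC k * degC c') = ksign (degC c * degC c')"
      by (rule ksign_mult_eq) (simp add: d[symmetric] algebra_simps)
    then show "(case (k, l) of (k, l) \<Rightarrow> sc (ksign (degC c * degC c')) (tens (mC c' k) (bv l))) =
          (case (k, l) of (k, l) \<Rightarrow> sc (ksign (degC l * degC c')) (tens (mC k c') (bv l)))"
      by (subst (2) comC) (simp add: tens_sc_l)
  qed
  finally show ?thesis .
qed

definition Tw :: "'c \<times> 'h \<Rightarrow> ('c \<times> 'h) vec" where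
  "Tw p = lin (\<lambda>(a, b). sc (ksign (degC a)) (tens (bv a) (gb (\<tau> b) (snd p)))) (cmC (fst p))"

lemma twd: "twisted_diff degC cmC dC degH mH dH \<tau> p = td p + Tw p"
  by (simp add: twisted_diff_def Tw_def)

lemma Tw_tens: "lin Tw (tens X Y) = lin (\<lambda>(a, b). sc (ksign (degC a)) (tens (bv a) (lin (gb (\<tau> b)) Y))) (lin cmC X)"
proof -
  have "lin Tw (tens X Y) = lin (\<lambda>k. lin (\<lambda>l. lin (\<lambda>q. sc (ksign (degC (fst q))) (tens (bv (fst q)) (gb (\<tau> (snd q)) l))) (cmC k)) Y) X"
    by (simp add: lin_tens Tw_def case_prod_beta')
  also have "\<dots> = lin (\<lambda>k. lin (\<lambda>q. lin (\<lambda>l. sc (ksign (degC (fst q))) (tens (bv (fst q)) (gb (\<tau> (snd q)) l))) Y) (cmC k)) X"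
    by (rule lin_cong) (rule lin_swap)
  also have "\<dots> = lin (\<lambda>k. lin (\<lambda>q. sc (ksign (degC (fst q))) (tens (bv (fst q)) (lin (gb (\<tau> (snd q))) Y))) (cmC k)) X"
    by (simp only: lin_fsc tens_lin_r[symmetric])
  also have "\<dots> = lin (\<lambda>(a, b). sc (ksign (degC a)) (tens (bv a) (lin (gb (\<tau> b)) Y))) (lin cmC X)"
    by (simp add: lin_lin case_prod_beta')
  finally show ?thesis .
qed

lemma lin_bvsign: "homog degC n X \<Longrightarrow> lin (\<lambda>a. sc (ksign (degC a) * e) (tens (bv a) Z)) X = sc (ksign n * e) (tens X Z)"
proof -
  assume hX: "homog degC n X"
  have "lin (\<lambda>a. sc (ksign (degC a) * e) (tens (bv a) Z)) X = lin (\<lambda>a. sc (ksign n * e) (tens (bv a) Z)) X"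
    by (rule lin_cong) (simp add: homogD[OF hX])
  also have "\<dots> = sc (ksign n * e) (tens X Z)"
    by (simp only: lin_fsc tens_lin_l[symmetric] lin_bv_id)
  finally show ?thesis .
qed

lemma lin_H_tens_bv: "lin (\<lambda>(a, b). F a b) (tens X (bv l)) = lin (\<lambda>a. F a l) X"
  by (simp add: lin_tens)

lemma LT: "lin Tw (tm (c, h) (c', h')) = lin (\<lambda>s. tm s (c', h')) (Tw (c, h))
             + sc (ksign (degC c + degH h)) (lin (tm (c, h)) (Tw (c', h')))"
proof -
  define G1 where "G1 b = lin (\<lambda>y. mH y h') (gb (\<tau> b) h)" for b
  define G2 where "G2 b = lin (mH h) (gb (\<tau> b) h')" for b
  define H1 where "H1 = (\<lambda>(a, b). sc (ksign (degC a) * 1) (tens (bv a) (G1 b)))"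
  define H2 where "H2 = (\<lambda>(a, b). sc (ksign (degC a) * ksign ((degC b - 1) * degH h)) (tens (bv a) (G2 b)))"
  define s0 where "s0 = ksign (degH h * degC c')"
  have fe: "(\<lambda>(a, b). sc (ksign (degC a)) (tens (bv a) (lin (gb (\<tau> b)) (mH h h')))) = (\<lambda>p. H1 p + H2 p)"
  proof (rule ext, clarify)
    fix a b
    show "sc (ksign (degC a)) (tens (bv a) (lin (gb (\<tau> b)) (mH h h'))) = H1 (a, b) + H2 (a, b)"
      unfolding br_mult[OF htau] H1_def H2_def G1_def G2_def
      by (simp only: tens_add_r tens_sc_r sc_add_r sc_sc prod.case mult_1_right)
  qed
  have "lin Tw (tm (c, h) (c', h')) = sc s0 (lin H1 (lin cmC (mC c c')) + lin H2 (lin cmC (mC c c')))"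
    unfolding tmul_pair lin_sc Tw_tens fe lin_fadd s0_def fst_conv snd_conv ..
  also have "lin H1 (lin cmC (mC c c')) = lin (\<lambda>(k, l). sc (ksign (degC l * degC c') * (ksign (degC k + degC c') * 1)) (tens (mC k c') (G1 l))) (cmC c)"
    unfolding F1 lin_lin
  proof (rule lin_cong, clarify)
    fix k l
    show "lin H1 (sc (ksign (degC l * degC c')) (tens (mC k c') (bv l))) =
        sc (ksign (degC l * degC c') * (ksign (degC k + degC c') * 1)) (tens (mC k c') (G1 l))"
      unfolding H1_def lin_sc lin_H_tens_bv lin_bvsign[OF hmC] by simp
  qed
  also have "lin H2 (lin cmC (mC c c')) = lin (\<lambda>(k, l). sc (ksign (degC c + degC k) * ksign ((degC l - 1) * degH h)) (tens (mC c k) (G2 l))) (cmC c')"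
    unfolding F2 lin_lin
  proof (rule lin_cong, clarify)
    fix k l
    show "lin H2 (tens (mC c k) (bv l)) =
        sc (ksign (degC c + degC k) * ksign ((degC l - 1) * degH h)) (tens (mC c k) (G2 l))"
      unfolding H2_def lin_H_tens_bv lin_bvsign[OF hmC] by simp
  qed
  finally have L: "lin Tw (tm (c, h) (c', h')) = sc s0 (lin (\<lambda>(k, l). sc (ksign (degC l * degC c') * (ksign (degC k + degC c') * 1)) (tens (mC k c') (G1 l))) (cmC c)
      + lin (\<lambda>(k, l). sc (ksign (degC c + degC k) * ksign ((degC l - 1) * degH h)) (tens (mC c k) (G2 l))) (cmC c'))" .
  have R1: "lin (\<lambda>s. tm s (c', h')) (Tw (c, h)) = lin (\<lambda>(k, l). sc (ksign (degC k) * ksign ((degC l - 1 + degH h) * degC c')) (tens (mC k c') (G1 l))) (cmC c)"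
    unfolding Tw_def lin_lin fst_conv snd_conv
  proof (rule lin_cong, clarify)
    fix k l
    show "lin (\<lambda>s. tm s (c', h')) (sc (ksign (degC k)) (tens (bv k) (gb (\<tau> l) h))) =
         sc (ksign (degC k) * ksign ((degC l - 1 + degH h) * degC c')) (tens (mC k c') (G1 l))"
      unfolding lin_sc lin_tens lin_tmul_r[OF hgb[OF htau]] G1_def by simp
  qed
  have R2: "lin (tm (c, h)) (Tw (c', h')) = lin (\<lambda>(k, l). sc (ksign (degC k) * ksign (degH h * degC k)) (tens (mC c k) (G2 l))) (cmC c')"
    unfolding Tw_def lin_lin fst_conv snd_conv
  proof (rule lin_cong, clarify)
    fix k l
    show "lin (tm (c, h)) (sc (ksign (degC k)) (tens (bv k) (gb (\<tau> l) h'))) =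
         sc (ksign (degC k) * ksign (degH h * degC k)) (tens (mC c k) (G2 l))"
      unfolding lin_sc lin_tens lin_tmul_l[OF homog_bv[THEN iffD2, OF refl]] G2_def by simp
  qed
  have E1: "sc s0 (lin (\<lambda>(k, l). sc (ksign (degC l * degC c') * (ksign (degC k + degC c') * 1)) (tens (mC k c') (G1 l))) (cmC c))
       = lin (\<lambda>(k, l). sc (ksign (degC k) * ksign ((degC l - 1 + degH h) * degC c')) (tens (mC k c') (G1 l))) (cmC c)"
    unfolding lin_fsc[symmetric]
  proof (rule lin_cm_cong)
    fix k l assume d: "degC k + degC l = degC c"
    have "s0 * (ksign (degC l * degC c') * (ksign (degC k + degC c') * 1)) = ksign (degC k) * ksign ((degC l - 1 + degH h) * degC c')"
      unfolding s0_def by (simp only: mult_1_right ksign_add[symmetric] ksign_eq_iff) (simp add: algebra_simps)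
    then show "sc s0 (case (k, l) of (k, l) \<Rightarrow> (sc (ksign (degC l * degC c') * (ksign (degC k + degC c') * 1)) (tens (mC k c') (G1 l)))) =
          (case (k, l) of (k, l) \<Rightarrow> sc (ksign (degC k) * ksign ((degC l - 1 + degH h) * degC c')) (tens (mC k c') (G1 l)))"
      by simp
  qed
  have E2: "sc s0 (lin (\<lambda>(k, l). sc (ksign (degC c + degC k) * ksign ((degC l - 1) * degH h)) (tens (mC c k) (G2 l))) (cmC c'))
       = sc (ksign (degC c + degH h)) (lin (\<lambda>(k, l). sc (ksign (degC k) * ksign (degH h * degC k)) (tens (mC c k) (G2 l))) (cmC c'))"
    unfolding lin_fsc[symmetric]
  proof (rule lin_cm_cong)
    fix k l assume d: "degC k + degC l = degC c'"
    have "s0 * (ksign (degC c + degC k) * ksign ((degC l - 1) * degH h)) = ksign (degC c + degH h) * (ksign (degC k) * ksign (degH h * degC k))"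
      unfolding s0_def by (simp only: mult_1_right ksign_add[symmetric] ksign_eq_iff) (simp add: d[symmetric] algebra_simps)
    then show "sc s0 (case (k, l) of (k, l) \<Rightarrow> (sc (ksign (degC c + degC k) * ksign ((degC l - 1) * degH h)) (tens (mC c k) (G2 l)))) =
          sc (ksign (degC c + degH h)) (case (k, l) of (k, l) \<Rightarrow> (sc (ksign (degC k) * ksign (degH h * degC k)) (tens (mC c k) (G2 l))))"
      by simp
  qed
  show ?thesis unfolding L R1 R2 sc_add_r E1 E2 ..
qed

end


context tsetup begin

definition P3 :: "'h \<Rightarrow> 'h \<Rightarrow> 'h \<Rightarrow> 'h vec" where
  "P3 x y z = lin (\<lambda>w. mH w z) (mH x y)"

lemma P3_r: "lin (mH x) (mH y z) = P3 x y z"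
  by (simp add: P3_def asH)

lemma gb_bv_mult: "lin (gb (bv k)) (mH l h) = P3 k l h - sc (ksign (degH k * (degH l + degH h))) (P3 l h k)"
proof -
  have "lin (gb (bv k)) (mH l h) = lin (\<lambda>y. mH k y - sc (ksign (degH k * (degH l + degH h))) (mH y k)) (mH l h)"
    by (rule lin_cong) (simp add: gb_bv homogD[OF hmH])
  then show ?thesis by (simp add: lin_fdiff lin_fsc P3_r P3_def)
qed

lemma gb_mult_bv: "gb (mH k l) h = P3 k l h - sc (ksign ((degH k + degH l) * degH h)) (P3 h k l)"
proof -
  have "gb (mH k l) h = lin (\<lambda>y. mH y h - sc (ksign ((degH k + degH l) * degH h)) (mH h y)) (mH k l)"
    unfolding gbracket_def by (rule lin_cong) (simp add: homogD[OF hmH])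
  then show ?thesis by (simp add: lin_fdiff lin_fsc P3_r P3_def)
qed

definition J :: "'h \<Rightarrow> 'h \<Rightarrow> 'h \<Rightarrow> 'h vec" where
  "J h k l = lin (gb (bv k)) (gb (bv l) h) - gb (mH k l) h"

lemma Jform: "J h k l = sc (- ksign (degH l * degH h)) (P3 k h l) + sc (- ksign (degH k * (degH l + degH h))) (P3 l h k)
   + sc (ksign (degH l * degH h + degH k * (degH h + degH l))) (P3 h l k) + sc (ksign ((degH k + degH l) * degH h)) (P3 h k l)"
proof -
  have "J h k l = (P3 k l h - sc (ksign (degH k * (degH l + degH h))) (P3 l h k))
      - sc (ksign (degH l * degH h)) (P3 k h l - sc (ksign (degH k * (degH h + degH l))) (P3 h l k))
      - (P3 k l h - sc (ksign ((degH k + degH l) * degH h)) (P3 h k l))"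
    unfolding J_def gb_bv lin_diff lin_sc gb_bv_mult gb_mult_bv ..
  also have "\<dots> = sc (- ksign (degH l * degH h)) (P3 k h l) + sc (- ksign (degH k * (degH l + degH h))) (P3 l h k)
   + sc (ksign (degH l * degH h) * ksign (degH k * (degH h + degH l))) (P3 h l k) + sc (ksign ((degH k + degH l) * degH h)) (P3 h k l)"
    by (simp add: sc_diff_r sc_minus_l algebra_simps)
  also have "ksign (degH l * degH h) * ksign (degH k * (degH h + degH l)) = ksign (degH l * degH h + degH k * (degH h + degH l))"
    by (simp add: ksign_add)
  finally show ?thesis .
qed

lemma jacobi: "J h k l = sc (ksign (degH k * degH l)) (J h l k)"
proof -
  have e1: "ksign (degH k * degH l) * - ksign (degH k * degH h) = - ksign (degH k * (degH l + degH h))"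
    by (simp add: distrib_left ksign_add)
  have e2: "ksign (degH k * degH l) * - ksign (degH l * (degH k + degH h)) = - ksign (degH l * degH h)"
  proof -
    have "ksign (degH k * degH l) * ksign (degH l * (degH k + degH h)) = ksign (degH l * degH h)"
      by (rule ksign_mult_eq) (simp add: algebra_simps)
    then show ?thesis by simp
  qed
  have e3: "ksign (degH k * degH l) * ksign (degH k * degH h + degH l * (degH h + degH k)) = ksign ((degH k + degH l) * degH h)"
    by (rule ksign_mult_eq) (simp add: algebra_simps)
  have e4: "ksign (degH k * degH l) * ksign ((degH l + degH k) * degH h) = ksign (degH l * degH h + degH k * (degH h + degH l))"
    by (rule ksign_mult_eq) (simp add: algebra_simps)
  show ?thesis unfolding Jform[of h k l] Jform[of h l k] sc_add_r sc_sc e1 e2 e3 e4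
    by (simp only: add_ac)
qed

lemma vec_self_neg: "(x :: 'a vec) = - x \<Longrightarrow> x = 0"
proof -
  assume a: "x = - x"
  show "x = 0"
  proof (rule poly_mapping_eqI)
    fix k have "lk x k = - lk x k" using arg_cong[OF a, of "\<lambda>v. lk v k"] by simp
    then show "lk x k = lk 0 k" by simp
  qed
qed

lemma gb_expand: "gb x h = lin (\<lambda>k. gb (bv k) h) x"
  using gb_lin[of bv x h] by simp

lemma lin_gb_expand: "lin (gb x) Y = lin (\<lambda>k. lin (gb (bv k)) Y) x"
proof -
  have "lin (gb x) Y = lin (\<lambda>y. lin (\<lambda>k. gb (bv k) y) x) Y"
    by (rule lin_cong) (rule gb_expand)
  also have "\<dots> = lin (\<lambda>k. lin (gb (bv k)) Y) x" by (rule lin_swap[symmetric])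
  finally show ?thesis .
qed

definition E :: "'h \<Rightarrow> 'c \<Rightarrow> 'c \<Rightarrow> 'h vec" where
  "E h y z = lin (gb (\<tau> y)) (gb (\<tau> z) h) - gb (lin2 mH (\<tau> y) (\<tau> z)) h"

lemma E_J: "E h y z = lin (\<lambda>k. lin (\<lambda>l. J h k l) (\<tau> z)) (\<tau> y)"
proof -
  have A: "lin (gb (\<tau> y)) (gb (\<tau> z) h) = lin (\<lambda>k. lin (\<lambda>l. lin (gb (bv k)) (gb (bv l) h)) (\<tau> z)) (\<tau> y)"
    unfolding lin_gb_expand[of "\<tau> y"] gb_expand[of "\<tau> z"] lin_lin by (rule lin_swap)
  have B: "gb (lin2 mH (\<tau> y) (\<tau> z)) h = lin (\<lambda>k. lin (\<lambda>l. gb (mH k l) h) (\<tau> z)) (\<tau> y)"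
    unfolding lin2_lin gb_lin ..
  show ?thesis unfolding E_def A B J_def lin_fdiff ..
qed

lemma E_swap: "E h z y = sc (ksign ((degC z - 1) * (degC y - 1))) (E h y z)"
proof -
  have "E h z y = lin (\<lambda>l. lin (\<lambda>k. J h k l) (\<tau> z)) (\<tau> y)"
    unfolding E_J by (rule lin_swap)
  also have "\<dots> = lin (\<lambda>l. lin (\<lambda>k. sc (ksign ((degC z - 1) * (degC y - 1))) (J h l k)) (\<tau> z)) (\<tau> y)"
  proof (rule lin_cong, rule lin_cong)
    fix l k assume l: "l \<in> kys (\<tau> y)" and k: "k \<in> kys (\<tau> z)"
    have "degH k = degC z - 1" "degH l = degC y - 1" using homogD[OF htau k] homogD[OF htau l] by auto
    then show "J h k l = sc (ksign ((degC z - 1) * (degC y - 1))) (J h l k)"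
      using jacobi[of h k l] by simp
  qed
  also have "\<dots> = sc (ksign ((degC z - 1) * (degC y - 1))) (E h y z)"
    unfolding E_J by (simp only: lin_fsc)
  finally show ?thesis .
qed

lemma cocom_lin: "lin F (cmC b) = lin (\<lambda>(a, c). sc (ksign (degC a * degC c)) (F (c, a))) (cmC b)"
proof -
  have "lin F (cmC b) = lin F (lin (\<lambda>(a, c). sc (ksign (degC a * degC c)) (bv (c, a))) (cmC b))"
    by (simp only: cocom)
  also have "\<dots> = lin (\<lambda>(a, c). sc (ksign (degC a * degC c)) (F (c, a))) (cmC b)"
    unfolding lin_lin by (rule lin_cong) (clarsimp simp only: case_prod_beta' lin_sc lin_bv)
  finally show ?thesis .
qed

lemma key: "lin (\<lambda>(y, z). sc (ksign (degC y)) (E h y z)) (cmC b) = 0"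
proof (rule vec_self_neg)
  let ?S = "lin (\<lambda>(y, z). sc (ksign (degC y)) (E h y z)) (cmC b)"
  have "?S = lin (\<lambda>(y, z). sc (ksign (degC y * degC z)) (sc (ksign (degC z)) (E h z y))) (cmC b)"
    by (subst cocom_lin) (simp add: case_prod_beta')
  also have "\<dots> = lin (\<lambda>(y, z). sc (- ksign (degC y)) (E h y z)) (cmC b)"
  proof (rule lin_cong, clarify)
    fix y z
    have "ksign (degC y * degC z) * (ksign (degC z) * ksign ((degC z - 1) * (degC y - 1))) = - ksign (degC y)"
      by (simp only: ksign_add[symmetric] ksign_neg_iff) (simp add: algebra_simps)
    then show "sc (ksign (degC y * degC z)) (sc (ksign (degC z)) (E h z y)) = sc (- ksign (degC y)) (E h y z)"
      unfolding E_swap[of h z y] sc_sc by (simp only: mult.assoc)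
  qed
  also have "\<dots> = - ?S"
    by (simp add: sc_minus_l lin_fminus case_prod_beta')
  finally show "?S = - ?S" .
qed

end


context tsetup begin

lemma dH_gb_bv: "lin dH (gb (bv k) h) = gb (dH k) h + sc (ksign (degH k)) (lin (gb (bv k)) (dH h))"
proof -
  let ?n = "degH k"
  have g1: "gb (dH k) h = lin (\<lambda>y. mH y h) (dH k) - sc (ksign ((?n - 1) * degH h)) (lin (mH h) (dH k))"
  proof -
    have "gb (dH k) h = lin (\<lambda>y. mH y h - sc (ksign ((?n - 1) * degH h)) (mH h y)) (dH k)"
      unfolding gbracket_def by (rule lin_cong) (simp add: homogD[OF hdH])
    then show ?thesis by (simp only: lin_fdiff lin_fsc)
  qed
  have g2: "lin (gb (bv k)) (dH h) = lin (mH k) (dH h) - sc (ksign (?n * (degH h - 1))) (lin (\<lambda>y. mH y k) (dH h))"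
  proof -
    have "lin (gb (bv k)) (dH h) = lin (\<lambda>y. mH k y - sc (ksign (?n * (degH h - 1))) (mH y k)) (dH h)"
      by (rule lin_cong) (simp add: gb_bv homogD[OF hdH])
    then show ?thesis by (simp only: lin_fdiff lin_fsc)
  qed
  have "lin dH (gb (bv k) h) = (lin (\<lambda>y. mH y h) (dH k) + sc (ksign ?n) (lin (mH k) (dH h)))
       - sc (ksign (?n * degH h)) (lin (\<lambda>y. mH y k) (dH h) + sc (ksign (degH h)) (lin (mH h) (dH k)))"
    unfolding gb_bv lin_diff lin_sc leibH ..
  also have "\<dots> = lin (\<lambda>y. mH y h) (dH k) - sc (ksign ((?n - 1) * degH h)) (lin (mH h) (dH k))
      + sc (ksign ?n) (lin (mH k) (dH h) - sc (ksign (?n * (degH h - 1))) (lin (\<lambda>y. mH y k) (dH h)))"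
  proof -
    have e1: "ksign (?n * degH h) * ksign (degH h) = ksign ((?n - 1) * degH h)"
      by (rule ksign_mult_eq) (simp add: algebra_simps)
    have e2: "ksign ?n * ksign (?n * (degH h - 1)) = ksign (?n * degH h)"
      by (rule ksign_mult_eq) (simp add: algebra_simps)
    show ?thesis unfolding sc_add_r sc_diff_r sc_sc e1 e2 by (simp add: algebra_simps)
  qed
  finally show ?thesis unfolding g1 g2 .
qed

lemma dH_gb: "homog degH n x \<Longrightarrow> lin dH (gb x h) = gb (lin dH x) h + sc (ksign n) (lin (gb x) (dH h))"
proof -
  assume hx: "homog degH n x"
  have "lin dH (gb x h) = lin (\<lambda>k. lin dH (gb (bv k) h)) x"
    unfolding gb_expand[of x] lin_lin ..
  also have "\<dots> = lin (\<lambda>k. gb (dH k) h + sc (ksign n) (lin (gb (bv k)) (dH h))) x"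
    by (rule lin_cong) (simp add: dH_gb_bv homogD[OF hx])
  also have "\<dots> = gb (lin dH x) h + sc (ksign n) (lin (gb x) (dH h))"
    unfolding lin_fadd lin_fsc gb_lin lin_gb_expand[of x] ..
  finally show ?thesis .
qed

lemma tdtd: "lin td (td p) = 0"
proof -
  obtain c h where p: "p = (c, h)" by fastforce
  have "lin td (td p) = (tens (lin dC (dC c)) (bv h) + sc (ksign (degC c - 1)) (tens (dC c) (dH h)))
      + sc (ksign (degC c)) (tens (dC c) (dH h) + sc (ksign (degC c)) (tens (bv c) (lin dH (dH h))))"
    unfolding p tdiff_def fst_conv snd_conv lin_add lin_sc lin_td_tens[OF hdC] lin_td_tens[OF homog_bv[THEN iffD2, OF refl]]
    by simp
  also have "\<dots> = 0"
  proof -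
    have "ksign (degC c - 1) = - ksign (degC c)" by (simp add: ksign_neg_iff)
    then show ?thesis by (simp add: ddC ddH sc_minus_l sc_add_r)
  qed
  finally show ?thesis .
qed

lemma coassoc_f:
  "lin (\<lambda>(a, b). lin (\<lambda>(x, y). f x y b) (cmC a)) (cmC c) = lin (\<lambda>(a, b). lin (\<lambda>(y, z). f a y z) (cmC b)) (cmC c)"
proof -
  let ?F = "\<lambda>(a, q). (case q of (y, z) \<Rightarrow> f a y z)"
  have "lin ?F (lin (\<lambda>((a, b), k). bv (a, (b, k))) (lin (\<lambda>(a, b). tens (cmC a) (bv b)) (cmC c)))
      = lin ?F (lin (\<lambda>(a, b). tens (bv a) (cmC b)) (cmC c))"
    by (simp only: coassoc)
  moreover have "lin ?F (lin (\<lambda>((a, b), k). bv (a, (b, k))) (lin (\<lambda>(a, b). tens (cmC a) (bv b)) (cmC c)))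
      = lin (\<lambda>(a, b). lin (\<lambda>(x, y). f x y b) (cmC a)) (cmC c)"
    unfolding lin_lin by (rule lin_cong) (auto simp: lin_tens case_prod_beta')
  moreover have "lin ?F (lin (\<lambda>(a, b). tens (bv a) (cmC b)) (cmC c))
      = lin (\<lambda>(a, b). lin (\<lambda>(y, z). f a y z) (cmC b)) (cmC c)"
    unfolding lin_lin by (rule lin_cong) (auto simp: lin_tens case_prod_beta')
  ultimately show ?thesis by simp
qed

lemma gb_add: "gb (x + y) h = gb x h + gb y h"
  by (simp add: gbracket_def lin_add)
lemma gb_minus: "gb (- x) h = - gb x h"
  by (simp add: gbracket_def lin_minus)
lemma gb_sc: "gb (sc s x) h = sc s (gb x h)"
  by (simp add: gbracket_def lin_sc)

lemma TwTw: "lin Tw (Tw (c, h)) = lin (\<lambda>(a, b). tens (bv a) (lin (\<lambda>(y, z). sc (ksign (degC y)) (lin (gb (\<tau> y)) (gb (\<tau> z) h))) (cmC b))) (cmC c)"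
proof -
  define f where "f x y z = sc (ksign (degC y)) (tens (bv x) (lin (gb (\<tau> y)) (gb (\<tau> z) h)))" for x y z :: 'c
  have "lin Tw (Tw (c, h)) = lin (\<lambda>(a, b). lin (\<lambda>(a', b'). sc (ksign (degC a) * ksign (degC a')) (tens (bv a') (lin (gb (\<tau> b')) (gb (\<tau> b) h)))) (cmC a)) (cmC c)"
    unfolding Tw_def[of "(c, h)"] lin_lin fst_conv snd_conv
    by (rule lin_cong) (auto simp: lin_sc Tw_tens lin_fsc[symmetric] case_prod_beta')
  also have "\<dots> = lin (\<lambda>(a, b). lin (\<lambda>(x, y). f x y b) (cmC a)) (cmC c)"
  proof (rule lin_cong, clarify)
    fix a b
    show "lin (\<lambda>(a', b'). sc (ksign (degC a) * ksign (degC a')) (tens (bv a') (lin (gb (\<tau> b')) (gb (\<tau> b) h)))) (cmC a)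
        = lin (\<lambda>(x, y). f x y b) (cmC a)"
    proof (rule lin_cm_cong)
      fix k l assume d: "degC k + degC l = degC a"
      have "ksign (degC a) * ksign (degC k) = ksign (degC l)"
        by (rule ksign_mult_eq) (simp add: d[symmetric])
      then show "(case (k, l) of (a', b') \<Rightarrow> sc (ksign (degC a) * ksign (degC a')) (tens (bv a') (lin (gb (\<tau> b')) (gb (\<tau> b) h))))
          = (case (k, l) of (x, y) \<Rightarrow> f x y b)"
        by (simp add: f_def)
    qed
  qed
  also have "\<dots> = lin (\<lambda>(a, b). lin (\<lambda>(y, z). f a y z) (cmC b)) (cmC c)" by (rule coassoc_f)
  also have "\<dots> = lin (\<lambda>(a, b). tens (bv a) (lin (\<lambda>(y, z). sc (ksign (degC y)) (lin (gb (\<tau> y)) (gb (\<tau> z) h))) (cmC b))) (cmC c)"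
    unfolding f_def by (rule lin_cong) (auto simp: tens_lin_r tens_sc_r case_prod_beta')
  finally show ?thesis .
qed

lemma lin_bvsign1: "homog degC n X \<Longrightarrow> lin (\<lambda>a. sc (ksign (degC a)) (tens (bv a) Z)) X = sc (ksign n) (tens X Z)"
  using lin_bvsign[of n X 1 Z] by simp

lemma TwTd: "lin Tw (td (c, h)) = lin (\<lambda>(a, b). sc (ksign (degC a - 1)) (tens (dC a) (gb (\<tau> b) h))
     + tens (bv a) (gb (lin \<tau> (dC b)) h) + sc (ksign (degC c) * ksign (degC a)) (tens (bv a) (lin (gb (\<tau> b)) (dH h)))) (cmC c)"
proof -
  define \<Phi> where "\<Phi> = (\<lambda>(a, b). sc (ksign (degC a)) (tens (bv a) (gb (\<tau> b) h)))"
  have ph: "lin (\<lambda>(a, b). sc (ksign (degC a)) (tens (bv a) (lin (gb (\<tau> b)) (bv h)))) = lin \<Phi>"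
    unfolding \<Phi>_def by simp
  have A: "lin Tw (tens (dC c) (bv h)) = lin (\<lambda>(a, b). sc (ksign (degC a - 1)) (tens (dC a) (gb (\<tau> b) h))
       + tens (bv a) (gb (lin \<tau> (dC b)) h)) (cmC c)"
  proof -
    have "lin Tw (tens (dC c) (bv h)) = lin (\<lambda>q. lin \<Phi> (tdiff degC dC dC q)) (cmC c)"
      unfolding Tw_tens ph coder lin_lin ..
    also have "\<dots> = lin (\<lambda>(a, b). sc (ksign (degC a - 1)) (tens (dC a) (gb (\<tau> b) h))
       + tens (bv a) (gb (lin \<tau> (dC b)) h)) (cmC c)"
    proof (rule lin_cong, clarify)
      fix a b
      have 1: "lin \<Phi> (tens (dC a) (bv b)) = sc (ksign (degC a - 1)) (tens (dC a) (gb (\<tau> b) h))"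
        unfolding \<Phi>_def lin_H_tens_bv by (rule lin_bvsign1[OF hdC])
      have 2: "lin \<Phi> (tens (bv a) (dC b)) = sc (ksign (degC a)) (tens (bv a) (gb (lin \<tau> (dC b)) h))"
        unfolding \<Phi>_def lin_tens lin_bv prod.case lin_fsc tens_lin_r[symmetric] gb_lin[symmetric] ..
      show "lin \<Phi> (tdiff degC dC dC (a, b)) = sc (ksign (degC a - 1)) (tens (dC a) (gb (\<tau> b) h)) + tens (bv a) (gb (lin \<tau> (dC b)) h)"
        unfolding tdiff_def fst_conv snd_conv lin_add lin_sc 1 2 sc_sc by simp
    qed
    finally show ?thesis .
  qed
  have B: "lin Tw (tens (bv c) (dH h)) = lin (\<lambda>(a, b). sc (ksign (degC a)) (tens (bv a) (lin (gb (\<tau> b)) (dH h)))) (cmC c)"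
    unfolding Tw_tens by simp
  show ?thesis
    unfolding tdiff_def fst_conv snd_conv lin_add lin_sc A B lin_fsc[symmetric] lin_fadd[symmetric]
    by (rule lin_cong) (auto simp: sc_sc)
qed

lemma TdTw: "lin td (Tw (c, h)) = lin (\<lambda>(a, b). sc (ksign (degC a)) (tens (dC a) (gb (\<tau> b) h))
     + tens (bv a) (gb (lin dH (\<tau> b)) h) + sc (ksign (degC b - 1)) (tens (bv a) (lin (gb (\<tau> b)) (dH h)))) (cmC c)"
  unfolding Tw_def lin_lin fst_conv snd_conv
proof (rule lin_cong, clarify)
  fix a b
  show "lin td (sc (ksign (degC a)) (tens (bv a) (gb (\<tau> b) h))) = sc (ksign (degC a)) (tens (dC a) (gb (\<tau> b) h))
     + tens (bv a) (gb (lin dH (\<tau> b)) h) + sc (ksign (degC b - 1)) (tens (bv a) (lin (gb (\<tau> b)) (dH h)))"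
    unfolding lin_sc lin_td_tens[OF homog_bv[THEN iffD2, OF refl]] dH_gb[OF htau] lin_bv
    by (simp add: tens_add_r tens_sc_r sc_add_r add.assoc mult.assoc[symmetric])
qed

definition Q :: "'c \<Rightarrow> 'h vec" where
  "Q b = lin (\<lambda>(a', b'). sc (ksign (degC a')) (lin2 mH (\<tau> a') (\<tau> b'))) (cmC b)"

lemma AB: "lin Tw (td (c, h)) + lin td (Tw (c, h)) = lin (\<lambda>(a, b). - tens (bv a) (gb (Q b) h)) (cmC c)"
  unfolding TwTd TdTw lin_fadd[symmetric]
proof (rule lin_cm_cong)
  fix a b assume d: "degC a + degC b = degC c"
  have s1: "ksign (degC a - 1) = - ksign (degC a)" by (simp add: ksign_neg_iff)
  have s2: "ksign (degC c) * ksign (degC a) = - ksign (degC b - 1)"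
    by (simp only: ksign_add[symmetric] ksign_neg_iff) (simp add: d[symmetric] algebra_simps)
  have q: "gb (Q b) h = - (gb (lin dH (\<tau> b)) h + gb (lin \<tau> (dC b)) h)"
  proof -
    have "Q b = - (lin dH (\<tau> b) + lin \<tau> (dC b))" using tweq[of b] unfolding Q_def
      by (subst (asm) add_eq_0_iff) simp
    then show ?thesis by (simp only: gb_minus gb_add)
  qed
  show "(case (a, b) of (a, b) \<Rightarrow> sc (ksign (degC a - 1)) (tens (dC a) (gb (\<tau> b) h))
     + tens (bv a) (gb (lin \<tau> (dC b)) h) + sc (ksign (degC c) * ksign (degC a)) (tens (bv a) (lin (gb (\<tau> b)) (dH h))))
     + (case (a, b) of (a, b) \<Rightarrow> sc (ksign (degC a)) (tens (dC a) (gb (\<tau> b) h)) + tens (bv a) (gb (lin dH (\<tau> b)) h)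
        + sc (ksign (degC b - 1)) (tens (bv a) (lin (gb (\<tau> b)) (dH h))))
     = (case (a, b) of (a, b) \<Rightarrow> - tens (bv a) (gb (Q b) h))"
    unfolding prod.case s1 s2 q sc_minus_l tens_minus_r tens_add_r by simp
qed

end


context tsetup begin

abbreviation "DD \<equiv> twisted_diff degC cmC dC degH mH dH \<tau>"

lemma DD_eq: "DD = (\<lambda>q. td q + Tw q)"
  by (rule ext) (rule twd)

lemma DD_sq: "lin DD (DD p) = 0"
proof -
  obtain c h where p: "p = (c, h)" by fastforce
  have S: "lin (\<lambda>(y, z). sc (ksign (degC y)) (lin (gb (\<tau> y)) (gb (\<tau> z) h))) (cmC b) - gb (Q b) h = 0" for b
  proof -
    have "gb (Q b) h = lin (\<lambda>(y, z). sc (ksign (degC y)) (gb (lin2 mH (\<tau> y) (\<tau> z)) h)) (cmC b)"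
      unfolding Q_def gb_lin by (rule lin_cong) (auto simp: gb_sc)
    moreover have "lin (\<lambda>(y, z). sc (ksign (degC y)) (E h y z)) (cmC b)
        = lin (\<lambda>(y, z). sc (ksign (degC y)) (lin (gb (\<tau> y)) (gb (\<tau> z) h))) (cmC b)
          - lin (\<lambda>(y, z). sc (ksign (degC y)) (gb (lin2 mH (\<tau> y) (\<tau> z)) h)) (cmC b)"
      unfolding lin_fdiff[symmetric] E_def by (rule lin_cong) (auto simp: sc_diff_r)
    ultimately have "lin (\<lambda>(y, z). sc (ksign (degC y)) (lin (gb (\<tau> y)) (gb (\<tau> z) h))) (cmC b) - gb (Q b) h
        = lin (\<lambda>(y, z). sc (ksign (degC y)) (E h y z)) (cmC b)" by simp
    then show ?thesis using key by simp
  qed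
  have "lin DD (DD p) = lin td (td p) + (lin Tw (td p) + lin td (Tw p)) + lin Tw (Tw p)"
    unfolding DD_eq lin_fadd lin_add by (simp only: add_ac)
  also have "\<dots> = lin (\<lambda>(a, b). - tens (bv a) (gb (Q b) h)) (cmC c)
      + lin (\<lambda>(a, b). tens (bv a) (lin (\<lambda>(y, z). sc (ksign (degC y)) (lin (gb (\<tau> y)) (gb (\<tau> z) h))) (cmC b))) (cmC c)"
    unfolding p tdtd AB TwTw by simp
  also have "\<dots> = lin (\<lambda>(a, b). tens (bv a) (lin (\<lambda>(y, z). sc (ksign (degC y)) (lin (gb (\<tau> y)) (gb (\<tau> z) h))) (cmC b) - gb (Q b) h)) (cmC c)"
    unfolding lin_fadd[symmetric] by (rule lin_cong) (auto simp: tens_diff_r)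
  also have "\<dots> = 0" unfolding S by (simp add: case_prod_unfold)
  finally show ?thesis .
qed

lemma DD_homog: "homog (tdeg degC degH) (tdeg degC degH p - 1) (DD p)"
proof -
  obtain c h where p: "p = (c, h)" by fastforce
  have 1: "homog (tdeg degC degH) (tdeg degC degH p - 1) (td p)"
    unfolding p tdiff_def fst_conv snd_conv
  proof (rule homog_add)
    have a: "homog degC (degC c - 1) (dC c)" by (rule hdC)
    have b: "homog degH (degH h) (bv h)" by simp
    show "homog (tdeg degC degH) (tdeg degC degH (c, h) - 1) (tens (dC c) (bv h))"
      using homog_tens[OF a b] by (simp add: tdeg_def diff_add_eq)
    have a': "homog degC (degC c) (bv c)" by simp
    have b': "homog degH (degH h - 1) (dH h)" by (rule hdH)
    show "homog (tdeg degC degH) (tdeg degC degH (c, h) - 1) (sc (ksign (degC c)) (tens (bv c) (dH h)))"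
      using homog_tens[OF a' b'] by (intro homog_sc) (simp add: tdeg_def add_diff_eq)
  qed
  have 2: "homog (tdeg degC degH) (tdeg degC degH p - 1) (Tw p)"
    unfolding p Tw_def fst_conv snd_conv
  proof (rule homog_lin)
    fix q assume q: "q \<in> kys (cmC c)"
    obtain a b where qab: "q = (a, b)" by fastforce
    have d: "degC a + degC b = degC c" using homogD[OF hcm q] by (simp add: qab tdeg_def)
    have "homog (tdeg degC degH) (degC a + (degC b - 1 + degH h)) (tens (bv a) (gb (\<tau> b) h))"
      by (rule homog_tens[OF homog_bv[THEN iffD2, OF refl] hgb[OF htau]])
    then show "homog (tdeg degC degH) (tdeg degC degH (c, h) - 1) ((\<lambda>(a, b). sc (ksign (degC a)) (tens (bv a) (gb (\<tau> b) h))) q)"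
      unfolding qab prod.case by (intro homog_sc) (simp add: tdeg_def d[symmetric] algebra_simps)
  qed
  show ?thesis unfolding twd by (rule homog_add[OF 1 2])
qed

lemma DD_leib: "leibniz (tdeg degC degH) tm DD"
  unfolding leibniz_def
proof (intro allI)
  fix p q :: "'c \<times> 'h"
  obtain c h where p: "p = (c, h)" by fastforce
  obtain c' h' where q: "q = (c', h')" by fastforce
  show "lin DD (tm p q) = lin2 tm (DD p) (bv q) + sc (ksign (tdeg degC degH p)) (lin2 tm (bv p) (DD q))"
    unfolding p q DD_eq lin2_bv_r lin2_bv_l lin_fadd lin_add L0 LT sc_add_r tdeg_def fst_conv snd_conv
    by (simp only: add_ac)
qed

lemma main: "dg_algebra (tdeg degC degH) tm (tens uC uH) DD"
  unfolding dg_algebra_def is_differential_def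
  using tensor_graded_algebra[OF gaC gaH] DD_homog DD_sq DD_leib by blast

end


theorem theorem3p22:
  fixes degC :: "'c::finite \<Rightarrow> int" and mC :: "'c \<Rightarrow> 'c \<Rightarrow> 'c vec" and uC :: "'c vec"
    and dC :: "'c \<Rightarrow> 'c vec" and ip :: "'c \<Rightarrow> 'c \<Rightarrow> rat" and cmC :: "'c \<Rightarrow> ('c \<times> 'c) vec"
    and degH :: "'h \<Rightarrow> int" and mH :: "'h \<Rightarrow> 'h \<Rightarrow> 'h vec" and uH :: "'h vec"
    and dH :: "'h \<Rightarrow> 'h vec" and cmH :: "'h \<Rightarrow> ('h \<times> 'h) vec" and eH :: "'h \<Rightarrow> rat"
    and \<tau> :: "'c \<Rightarrow> 'h vec"
  assumes frob: "dg_frobenius degC mC uC dC ip"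
    and comult: "induced_comult degC mC ip cmC"
    and coalg: "dg_coalgebra degC cmC dC"
    and cocomm: "cocommutative degC cmC"
    and bialg: "dg_bialgebra degH mH uH dH cmH eH"
    and tw: "twisting_cochain degC cmC dC degH mH dH \<tau>"
    and prim: "\<forall>c. \<tau> c \<in> Prim cmH uH"
  shows "dg_algebra (tdeg degC degH) (tmul degC degH mC mH) (tens uC uH)
           (twisted_diff degC cmC dC degH mH dH \<tau>)"
proof -
  interpret tsetup degC mC uC dC ip cmC degH mH uH dH cmH eH \<tau>
    by (unfold_locales) (rule frob comult coalg cocomm bialg tw)+
  show ?thesis by (rule main)
qed

end
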